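(* Let $p\colon G(J)\to D'(K)$ be a realizable puzzle, $J=(j_1,\dots,j_m)$, and write $p(\mathbf 1)=(\mathbf a_1\ \cdots\ \mathbf a_m)$ for $\mathbf 1=(1,\dots,1)$. For each $v\in[m]$ and each $2\le a\le j_v$, let $\mathbf h$ be the vertex of $G(J)$ with $h_v=a$ and $h_i=1$ for $i\ne v$; the subpuzzle on the edge $\{\mathbf 1,\mathbf h\}$ is realizable by a characteristic map over $\operatorname{wed}_vK$ whose projection at $v_2$ (corresponding to $\mathbf 1$) is $p(\mathbf 1)$, and we fix for it a standard form, i.e. a representative whose columns labeled $1,\dots,v-1,v_1,v_2,v+1,\dots,m$ are $(\mathbf a_i; e^{a}_{v,i})$ for $i\ne v$, $(\mathbf a_v;-1)$ and $(0;1)$, with $e^a_{v,i}\in R$. Define the block matrices $A_i=(\mathbf a_i\ 0\ \cdots\ 0)$ of size $n\times j_i$; $S_i$ of size $(j_i-1)\times j_i$ whose row $t$ ($1\le t\le j_i-1$) has $-1$ in column $1$, $1$ in column $t+1$ and $0$ elsewhere; and $E_{k,i}$ ($k\ne i$) of size $(j_k-1)\times j_i$ whose first column is $(e^2_{k,i},e^3_{k,i},\dots,e^{j_k}_{k,i})^T$ and other columns are zero. Then the matrix $$\Lambda=\begin{pmatrix} A_1&A_2&\cdots&A_m\\ S_1&E_{1,2}&\cdots&E_{1,m}\\ E_{2,1}&S_2&\cdots&E_{2,m}\\ \vdots&&\ddots&\vdots\\ E_{m,1}&\cdots&E_{m,m-1}&S_m\end{pmatrix},$$ with columns labeled $1_1,\dots,1_{j_1},2_1,\dots,2_{j_2},\dots,m_1,\dots,m_{j_m}$,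 is an $R$-characteristic map over $K(J)$ realizing $p$. In particular, a realizable puzzle is uniquely determined by $p(\mathbf 1)$ and the values $p(\boldsymbol\alpha)$ at the vertices $\boldsymbol\alpha$ adjacent to $\mathbf 1$.
   Context: Let $R\in\{\mathbb Z,\mathbb Z_2\}$; an $R$-basis of $R^n$ is a $\mathbb Z$-basis of $\mathbb Z^n$ ($R=\mathbb Z$) or a basis of $\mathbb Z_2^n$ ($R=\mathbb Z_2$). $K$ is an $(n-1)$-dimensional star-shaped simplicial sphere on $[m]$. An $R$-characteristic map over a complex with $(N-1)$-dimensional facets is a map from its vertices to $R^N$ sending each $(N-1)$-face to an $R$-basis, written as the matrix of its columns; D-J equivalence is equality up to left multiplication by $GL_N(R)$. For a face $\sigma$, $\operatorname{proj}_\sigma\lambda$ is the characteristic map on $\operatorname{link}\sigma$ given by $w\mapsto[\lambda(w)]\in R^N/\langle\lambda(u):u\in\sigma\rangle$, up to D-J equivalence. For $J=(j_1,\dots,j_m)\in\mathbb Z_{>0}^m$, $K(J)$ is the complex on vertices $\{i_k:1\le i\le m,1\le k\le j_i\}$ whose minimal non-faces are the sets $\bigcup_{i\in\tau}\{i_1,\dots,i_{j_i}\}$ for $\tau$ a minimal non-face of $K$; $\operatorname{wed}_vK=K(J)$ with $j_v=2$, $j_i=1$ otherwise (vertices $v_1,v_2$; $i_1$ written $i$). $I(J)=\{\boldsymbol\alpha\in\mathbb Z^m:1\le\alpha_i\le j_i\}$. For $\boldsymbol\alpha\in I(J)$, $\sigma(\boldsymbol\alpha)$ is the set of all vertices of $K(J)$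 except $1_{\alpha_1},\dots,m_{\alpha_m}$; it is a face, and $\operatorname{link}_{K(J)}\sigma(\boldsymbol\alpha)$ is identified with $K$ via $i_{\alpha_i}\mapsto i$. The pre-diagram $D'(K)$ is the edge-colored multigraph (loops allowed) whose vertices are D-J classes of $R$-characteristic maps over $K$, with an edge colored $v$ between $\lambda_1,\lambda_2$ iff some $R$-characteristic map $\Lambda$ over $\operatorname{wed}_vK$ has $\operatorname{proj}_{v_1}\Lambda=\lambda_1$, $\operatorname{proj}_{v_2}\Lambda=\lambda_2$ (via the identifications above). $G(J)$ is the $1$-skeleton of $\Delta^{j_1-1}\times\cdots\times\Delta^{j_m-1}$, with vertex set $I(J)$, two vertices adjacent iff they differ in exactly one coordinate $v$, such an edge being colored $v$. A puzzle of $(K,J)$ is a color-preserving graph homomorphism $p:G(J)\to D'(K)$. For an $R$-characteristic map $\Lambda$ over $K(J)$, the map $\boldsymbol\alpha\mapsto\operatorname{proj}_{\sigma(\boldsymbol\alpha)}\Lambda$ is a puzzle; puzzles of this form are called realizable (realized by $\Lambda$). For nonempty $S_i\subseteq[j_i]$, the restriction of $p$ to the induced subgraph on $\prod S_i$, identified with $G(J')$ ($j'_i=|S_i|$) via order-preserving bijections, is a subpuzzle, itself a puzzle of $(K,J')$. *)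

theory Defs
  imports Complex_Main
begin

text \<open>Vectors of R^N are functions nat => 'r vanishing at every index >= N
 (coordinates are 0,...,N-1).  The coefficient ring R is a type 'r, which is
 required to be isomorphic to Z (of_int bijective) or to Z_2 (exactly two
 elements).\<close>

definition R_ring :: "'r::comm_ring_1 itself \<Rightarrow> bool" where
  "R_ring _ \<longleftrightarrow> bij (of_int :: int \<Rightarrow> 'r) \<or> card (UNIV :: 'r set) = 2"

definition vecs :: "nat \<Rightarrow> (nat \<Rightarrow> 'r::zero) set" where
  "vecs N = {x. \<forall>i. N \<le> i \<longrightarrow> x i = 0}"

definition lincomb :: "('v \<Rightarrow> nat \<Rightarrow> 'r::comm_ring_1) \<Rightarrow> 'v set \<Rightarrow> ('v \<Rightarrow> 'r) \<Rightarrow> nat \<Rightarrow> 'r" where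
  "lincomb lam S c = (\<lambda>k. \<Sum>u\<in>S. c u * lam u k)"

definition is_basis :: "nat \<Rightarrow> ('v \<Rightarrow> nat \<Rightarrow> 'r::comm_ring_1) \<Rightarrow> 'v set \<Rightarrow> bool" where
  "is_basis N lam S \<longleftrightarrow>
     bij_betw (lincomb lam S) {c. \<forall>u. u \<notin> S \<longrightarrow> c u = 0} (vecs N)"

definition rspan :: "('v \<Rightarrow> nat \<Rightarrow> 'r::comm_ring_1) \<Rightarrow> 'v set \<Rightarrow> (nat \<Rightarrow> 'r) set" where
  "rspan lam S = {lincomb lam S c | c. True}"

definition mv :: "nat \<Rightarrow> nat \<Rightarrow> (nat \<Rightarrow> nat \<Rightarrow> 'r::comm_ring_1) \<Rightarrow> (nat \<Rightarrow> 'r) \<Rightarrow> nat \<Rightarrow> 'r" where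
  "mv M N U x = (\<lambda>i. if i < M then (\<Sum>j<N. U i j * x j) else 0)"

definition GLmat :: "nat \<Rightarrow> (nat \<Rightarrow> nat \<Rightarrow> 'r::comm_ring_1) \<Rightarrow> bool" where
  "GLmat N U \<longleftrightarrow> (\<exists>W. \<forall>x\<in>vecs N. mv N N W (mv N N U x) = x \<and> mv N N U (mv N N W x) = x)"

definition simplicial_complex_on :: "nat \<Rightarrow> nat set set \<Rightarrow> bool" where
  "simplicial_complex_on m K \<longleftrightarrow>
     K \<subseteq> Pow {1..m} \<and> {} \<in> K \<and> (\<forall>\<sigma>\<in>K. \<forall>\<tau>. \<tau> \<subseteq> \<sigma> \<longrightarrow> \<tau> \<in> K) \<and> (\<forall>i\<in>{1..m}. {i} \<in> K)"

definition minimal_nonface :: "nat \<Rightarrow> nat set set \<Rightarrow> nat set \<Rightarrow> bool" where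
  "minimal_nonface m K \<tau> \<longleftrightarrow> \<tau> \<subseteq> {1..m} \<and> \<tau> \<notin> K \<and> (\<forall>\<rho>. \<rho> \<subset> \<tau> \<longrightarrow> \<rho> \<in> K)"

definition conv_pts :: "(nat \<Rightarrow> nat \<Rightarrow> real) \<Rightarrow> nat set \<Rightarrow> (nat \<Rightarrow> real) set" where
  "conv_pts x S = {y. \<exists>t. (\<forall>u\<in>S. 0 \<le> t u) \<and> (\<Sum>u\<in>S. t u) = 1 \<and> y = (\<lambda>k. \<Sum>u\<in>S. t u * x u k)}"

definition aff_indep_pts :: "(nat \<Rightarrow> nat \<Rightarrow> real) \<Rightarrow> nat set \<Rightarrow> bool" where
  "aff_indep_pts x S \<longleftrightarrow> (\<forall>c. (\<Sum>u\<in>S. c u) = 0 \<and> (\<lambda>k. \<Sum>u\<in>S. c u * x u k) = (\<lambda>k. 0)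
        \<longrightarrow> (\<forall>u\<in>S. c u = 0))"

definition geom_realization :: "nat \<Rightarrow> nat set set \<Rightarrow> (nat \<Rightarrow> nat \<Rightarrow> real) \<Rightarrow> bool" where
  "geom_realization n K x \<longleftrightarrow>
     (\<forall>u. x u \<in> vecs n) \<and> (\<forall>\<sigma>\<in>K. aff_indep_pts x \<sigma>) \<and>
     (\<forall>\<sigma>\<in>K. \<forall>\<tau>\<in>K. conv_pts x \<sigma> \<inter> conv_pts x \<tau> = conv_pts x (\<sigma> \<inter> \<tau>))"

definition polyhedron :: "nat set set \<Rightarrow> (nat \<Rightarrow> nat \<Rightarrow> real) \<Rightarrow> (nat \<Rightarrow> real) set" where
  "polyhedron K x = (\<Union>\<sigma>\<in>K. conv_pts x \<sigma>)"

definition star_shaped_sphere :: "nat \<Rightarrow> nat \<Rightarrow> nat set set \<Rightarrow> bool" where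
  "star_shaped_sphere n m K \<longleftrightarrow>
     simplicial_complex_on m K \<and> (\<forall>\<sigma>\<in>K. card \<sigma> \<le> n) \<and> (\<exists>\<sigma>\<in>K. card \<sigma> = n) \<and>
     (\<exists>x p. geom_realization n K x \<and> p \<in> vecs n \<and>
        (\<forall>d\<in>vecs n. d \<noteq> (\<lambda>k. 0) \<longrightarrow>
           (\<exists>!y. y \<in> polyhedron K x \<and> (\<exists>t::real. 0 \<le> t \<and> y = (\<lambda>k. p k + t * d k)))))"

definition charmap :: "nat \<Rightarrow> 'v set set \<Rightarrow> ('v \<Rightarrow> nat \<Rightarrow> 'r::comm_ring_1) \<Rightarrow> bool" where
  "charmap N L lam \<longleftrightarrow>
     (\<forall>v\<in>\<Union>L. lam v \<in> vecs N) \<and> (\<forall>\<sigma>\<in>L. card \<sigma> = N \<longrightarrow> is_basis N lam \<sigma>)"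

definition DJclass :: "nat \<Rightarrow> 'v set \<Rightarrow> ('v \<Rightarrow> nat \<Rightarrow> 'r::comm_ring_1) \<Rightarrow> ('v \<Rightarrow> nat \<Rightarrow> 'r) set" where
  "DJclass N V lam = {mu. (\<forall>v. v \<notin> V \<longrightarrow> mu v = (\<lambda>k. 0)) \<and>
       (\<exists>U. GLmat N U \<and> (\<forall>v\<in>V. mu v = mv N N U (lam v)))}"

definition DVert :: "nat \<Rightarrow> nat \<Rightarrow> nat set set \<Rightarrow> (nat \<Rightarrow> nat \<Rightarrow> 'r::comm_ring_1) set set" where
  "DVert n m K = {DJclass n {1..m} lam | lam. charmap n K lam}"

text \<open>The complex K(J), with vertices (i,k) standing for i_k.\<close>
definition VJ :: "nat \<Rightarrow> (nat \<Rightarrow> nat) \<Rightarrow> (nat \<times> nat) set" where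
  "VJ m J = {(i, k). i \<in> {1..m} \<and> 1 \<le> k \<and> k \<le> J i}"

definition KJ :: "nat \<Rightarrow> nat set set \<Rightarrow> (nat \<Rightarrow> nat) \<Rightarrow> (nat \<times> nat) set set" where
  "KJ m K J = {\<sigma>. \<sigma> \<subseteq> VJ m J \<and>
      (\<forall>\<tau>. minimal_nonface m K \<tau> \<longrightarrow> \<not> (\<Union>i\<in>\<tau>. {(i, k) | k. 1 \<le> k \<and> k \<le> J i}) \<subseteq> \<sigma>)}"

definition NJ :: "nat \<Rightarrow> nat \<Rightarrow> (nat \<Rightarrow> nat) \<Rightarrow> nat" where
  "NJ n m J = n + (\<Sum>i\<in>{1..m}. J i - 1)"

text \<open>J for the wedge wed_v K = K(J) with j_v = 2, others 1: v_1 = (v,1), v_2 = (v,2), i = (i,1).\<close>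
definition wedJ :: "nat \<Rightarrow> nat \<Rightarrow> nat" where
  "wedJ v = (\<lambda>i. if i = v then 2 else 1)"

definition IJ :: "nat \<Rightarrow> (nat \<Rightarrow> nat) \<Rightarrow> (nat \<Rightarrow> nat) set" where
  "IJ m J = {\<alpha>. (\<forall>i\<in>{1..m}. 1 \<le> \<alpha> i \<and> \<alpha> i \<le> J i) \<and> (\<forall>i. i \<notin> {1..m} \<longrightarrow> \<alpha> i = 1)}"

definition one_idx :: "nat \<Rightarrow> nat" where
  "one_idx = (\<lambda>i. 1)"

definition sigmaJ :: "nat \<Rightarrow> (nat \<Rightarrow> nat) \<Rightarrow> (nat \<Rightarrow> nat) \<Rightarrow> (nat \<times> nat) set" where
  "sigmaJ m J \<alpha> = VJ m J - {(i, \<alpha> i) | i. i \<in> {1..m}}"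

text \<open>proj_sigma Lam, for Lam a map into R^N and a face sigma whose link is identified with K
 via iota, as a D-J class of maps [m] -> R^n: compose Lam with a surjective linear map
 R^N -> R^n whose kernel is the span of Lam(sigma) (i.e. an identification of the quotient
 R^N / <Lam(u) : u in sigma> with R^n).\<close>
definition projK :: "nat \<Rightarrow> nat \<Rightarrow> nat \<Rightarrow> ('v \<Rightarrow> nat \<Rightarrow> 'r::comm_ring_1) \<Rightarrow> 'v set
     \<Rightarrow> (nat \<Rightarrow> 'v) \<Rightarrow> (nat \<Rightarrow> nat \<Rightarrow> 'r) set" where
  "projK n m N Lam \<sigma> iota = {mu. (\<forall>i. i \<notin> {1..m} \<longrightarrow> mu i = (\<lambda>k. 0)) \<and>
      (\<exists>\<phi>. mv n N \<phi> ` vecs N = vecs n \<and> {x \<in> vecs N. mv n N \<phi> x = (\<lambda>k. 0)} = rspan Lam \<sigma> \<and>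
           (\<forall>i\<in>{1..m}. mu i = mv n N \<phi> (Lam (iota i))))}"

text \<open>proj_{sigma(alpha)} Lam for Lam over K(J), with link sigma(alpha) identified with K
 via i_{alpha_i} |-> i.\<close>
definition projJ :: "nat \<Rightarrow> nat \<Rightarrow> (nat \<Rightarrow> nat) \<Rightarrow> (nat \<times> nat \<Rightarrow> nat \<Rightarrow> 'r::comm_ring_1)
     \<Rightarrow> (nat \<Rightarrow> nat) \<Rightarrow> (nat \<Rightarrow> nat \<Rightarrow> 'r) set" where
  "projJ n m J Lam \<alpha> = projK n m (NJ n m J) Lam (sigmaJ m J \<alpha>) (\<lambda>i. (i, \<alpha> i))"

text \<open>Edge colored v of D'(K) from c1 = proj_{v_1} Lam to c2 = proj_{v_2} Lam.\<close>
definition Dedge :: "nat \<Rightarrow> nat \<Rightarrow> nat set set \<Rightarrow> nat \<Rightarrow> (nat \<Rightarrow> nat \<Rightarrow> 'r::comm_ring_1) set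
     \<Rightarrow> (nat \<Rightarrow> nat \<Rightarrow> 'r) set \<Rightarrow> bool" where
  "Dedge n m K v c1 c2 \<longleftrightarrow> (\<exists>Lam. charmap (n + 1) (KJ m K (wedJ v)) Lam \<and>
      projJ n m (wedJ v) Lam (one_idx(v := 2)) = c1 \<and> projJ n m (wedJ v) Lam one_idx = c2)"

text \<open>A puzzle: colour-preserving graph homomorphism G(J) -> D'(K) (edges are unordered).\<close>
definition puzzle :: "nat \<Rightarrow> nat \<Rightarrow> nat set set \<Rightarrow> (nat \<Rightarrow> nat)
     \<Rightarrow> ((nat \<Rightarrow> nat) \<Rightarrow> (nat \<Rightarrow> nat \<Rightarrow> 'r::comm_ring_1) set) \<Rightarrow> bool" where
  "puzzle n m K J p \<longleftrightarrow>
     (\<forall>\<alpha>\<in>IJ m J. p \<alpha> \<in> DVert n m K) \<and>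
     (\<forall>\<alpha>\<in>IJ m J. \<forall>\<beta>\<in>IJ m J. \<forall>v\<in>{1..m}. \<alpha> v \<noteq> \<beta> v \<and> (\<forall>i. i \<noteq> v \<longrightarrow> \<alpha> i = \<beta> i) \<longrightarrow>
        Dedge n m K v (p \<alpha>) (p \<beta>) \<or> Dedge n m K v (p \<beta>) (p \<alpha>))"

definition realizes :: "nat \<Rightarrow> nat \<Rightarrow> (nat \<Rightarrow> nat) \<Rightarrow> (nat \<times> nat \<Rightarrow> nat \<Rightarrow> 'r::comm_ring_1)
     \<Rightarrow> ((nat \<Rightarrow> nat) \<Rightarrow> (nat \<Rightarrow> nat \<Rightarrow> 'r) set) \<Rightarrow> bool" where
  "realizes n m J Lam p \<longleftrightarrow> (\<forall>\<alpha>\<in>IJ m J. p \<alpha> = projJ n m J Lam \<alpha>)"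

definition realizable_puzzle :: "nat \<Rightarrow> nat \<Rightarrow> nat set set \<Rightarrow> (nat \<Rightarrow> nat)
     \<Rightarrow> ((nat \<Rightarrow> nat) \<Rightarrow> (nat \<Rightarrow> nat \<Rightarrow> 'r::comm_ring_1) set) \<Rightarrow> bool" where
  "realizable_puzzle n m K J p \<longleftrightarrow> puzzle n m K J p \<and>
     (\<exists>Lam. charmap (NJ n m J) (KJ m K J) Lam \<and> realizes n m J Lam p)"

text \<open>Standard form over wed_v K (columns i=(i,1) for i /= v, v_1=(v,1), v_2=(v,2); R^{n+1} has
 coordinates 0..n, the last one being n): columns (a_i; ev i), (a_v; -1), (0; 1).\<close>
definition stdform :: "nat \<Rightarrow> (nat \<Rightarrow> nat \<Rightarrow> 'r::comm_ring_1) \<Rightarrow> nat \<Rightarrow> (nat \<Rightarrow> 'r)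
     \<Rightarrow> nat \<times> nat \<Rightarrow> nat \<Rightarrow> 'r" where
  "stdform n a v ev = (\<lambda>(i, c) r.
     if r < n then (if i = v \<and> c = 2 then 0 else a i r)
     else if r = n then (if i = v then (if c = 1 then - 1 else 1) else ev i)
     else 0)"

text \<open>The standard form with last-row entries ev realizes the subpuzzle of p on the edge
 {1, h}, h = 1 with h_v = b (v_2 corresponding to 1, v_1 to h).\<close>
definition std_ok :: "nat \<Rightarrow> nat \<Rightarrow> nat set set \<Rightarrow> ((nat \<Rightarrow> nat) \<Rightarrow> (nat \<Rightarrow> nat \<Rightarrow> 'r::comm_ring_1) set)
     \<Rightarrow> (nat \<Rightarrow> nat \<Rightarrow> 'r) \<Rightarrow> nat \<Rightarrow> nat \<Rightarrow> (nat \<Rightarrow> 'r) \<Rightarrow> bool" where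
  "std_ok n m K p a v b ev \<longleftrightarrow>
     charmap (n + 1) (KJ m K (wedJ v)) (stdform n a v ev) \<and>
     projJ n m (wedJ v) (stdform n a v ev) one_idx = p one_idx \<and>
     projJ n m (wedJ v) (stdform n a v ev) (one_idx(v := 2)) = p (one_idx(v := b))"

text \<open>Rows of Lambda: 0..<n for the A-blocks; the block of row k (S_k, E_{k,i}) occupies rows
 blk_off n J k + (t-1), 1 <= t <= J k - 1.\<close>
definition blk_off :: "nat \<Rightarrow> (nat \<Rightarrow> nat) \<Rightarrow> nat \<Rightarrow> nat" where
  "blk_off n J k = n + (\<Sum>i\<in>{1..<k}. J i - 1)"

definition in_row :: "nat \<Rightarrow> (nat \<Rightarrow> nat) \<Rightarrow> nat \<Rightarrow> nat \<Rightarrow> nat \<Rightarrow> bool" where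
  "in_row n J k t r \<longleftrightarrow> 1 \<le> t \<and> t \<le> J k - 1 \<and> r = blk_off n J k + (t - 1)"

text \<open>e k b i stands for e^b_{k,i}.\<close>
definition blockLambda :: "nat \<Rightarrow> nat \<Rightarrow> (nat \<Rightarrow> nat) \<Rightarrow> (nat \<Rightarrow> nat \<Rightarrow> 'r::comm_ring_1)
     \<Rightarrow> (nat \<Rightarrow> nat \<Rightarrow> nat \<Rightarrow> 'r) \<Rightarrow> nat \<times> nat \<Rightarrow> nat \<Rightarrow> 'r" where
  "blockLambda n m J a e = (\<lambda>(i, c) r.
     if r < n then (if c = 1 then a i r else 0)
     else if (\<exists>k\<in>{1..m}. \<exists>t. in_row n J k t r) then
       (let (k, t) = (THE (k, t). k \<in> {1..m} \<and> in_row n J k t r) in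
         if k = i then (if c = 1 then - 1 else if c = t + 1 then 1 else 0)
         else (if c = 1 then e k (t + 1) i else 0))
     else 0)"

end

theory Submission
  imports Defs
begin

definition dotp :: "nat \<Rightarrow> (nat \<Rightarrow> real) \<Rightarrow> (nat \<Rightarrow> real) \<Rightarrow> real" where
  "dotp n f v = (\<Sum>j<n. f j * v j)"

lemma vecs_iff_p: "x \<in> vecs N \<longleftrightarrow> (\<forall>i. N \<le> i \<longrightarrow> x i = 0)"
  unfolding vecs_def by simp

lemma dotp_add: "dotp n f (\<lambda>k. u k + v k) = dotp n f u + dotp n f v"
  unfolding dotp_def by (simp add: distrib_left sum.distrib)

lemma dotp_diff: "dotp n f (\<lambda>k. u k - v k) = dotp n f u - dotp n f v"
  unfolding dotp_def by (simp add: right_diff_distrib sum_subtractf)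

lemma dotp_smul: "dotp n f (\<lambda>k. c * v k) = c * dotp n f v"
  unfolding dotp_def by (simp add: sum_distrib_left ac_simps)

lemma dotp_sum: "dotp n f (\<lambda>k. \<Sum>u\<in>S. c u * v u k) = (\<Sum>u\<in>S. c u * dotp n f (v u))"
  unfolding dotp_def by (simp add: sum_distrib_left sum.swap[of _ "{..<n}"] ac_simps)

lemma homsol:
  "finite V \<Longrightarrow> card V < n \<Longrightarrow> V \<subseteq> vecs n \<Longrightarrow>
    \<exists>f\<in>vecs n. f \<noteq> (\<lambda>k. 0) \<and> (\<forall>v\<in>V. dotp n f v = 0)"
proof (induction n arbitrary: V)
  case 0
  then show ?case by simp
next
  case (Suc n)
  show ?case
  proof (cases "\<forall>v\<in>V. v n = 0")
    case True
    define f :: "nat \<Rightarrow> real" where "f = (\<lambda>k. if k = n then 1 else 0)"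
    have d: "dotp (Suc n) f v = v n" for v unfolding dotp_def f_def by simp
    have fv: "f \<in> vecs (Suc n)" unfolding f_def vecs_def by auto
    have fz: "f \<noteq> (\<lambda>k. 0)" unfolding f_def by (auto simp: fun_eq_iff)
    have "\<forall>v\<in>V. dotp (Suc n) f v = 0" using True d by simp
    then show ?thesis using fv fz by blast
  next
    case False
    then obtain v0 where v0: "v0 \<in> V" "v0 n \<noteq> 0" by blast
    define pr where "pr v = (\<lambda>k. v k - (v n / v0 n) * v0 k)" for v
    define V' where "V' = pr ` (V - {v0})"
    have fV': "finite V'" unfolding V'_def using Suc.prems(1) by simp
    have cV': "card V' < n"
    proof -
      have "card V' \<le> card (V - {v0})" unfolding V'_def by (rule card_image_le) (use Suc.prems(1) in simp)
      also have "\<dots> = card V - 1" using v0(1) Suc.prems(1) by simp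
      finally have "card V' \<le> card V - 1" .
      moreover have "0 < card V" using v0(1) Suc.prems(1) card_gt_0_iff by blast
      ultimately show ?thesis using Suc.prems(2) by linarith
    qed
    have V'v: "V' \<subseteq> vecs n"
    proof
      fix v' assume "v' \<in> V'"
      then obtain v where v: "v \<in> V" "v' = pr v" unfolding V'_def by blast
      have vv: "v \<in> vecs (Suc n)" "v0 \<in> vecs (Suc n)" using v(1) v0(1) Suc.prems(3) by auto
      show "v' \<in> vecs n" unfolding v(2) pr_def vecs_iff_p
      proof (intro allI impI)
        fix i assume i: "n \<le> i"
        show "v i - v n / v0 n * v0 i = 0"
        proof (cases "i = n")
          case True then show ?thesis using v0(2) by simp
        next
          case False then have "Suc n \<le> i" using i by simp
          then show ?thesis using vv unfolding vecs_def by simp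
        qed
      qed
    qed
    obtain f' where f': "f' \<in> vecs n" "f' \<noteq> (\<lambda>k. 0)" "\<forall>v\<in>V'. dotp n f' v = 0"
      using Suc.IH[OF fV' cV' V'v] by blast
    define al where "al = - dotp n f' v0 / v0 n"
    define f where "f = (\<lambda>k. if k = n then al else f' k)"
    have dS: "dotp (Suc n) f v = dotp n f' v + al * v n" for v
      unfolding dotp_def f_def using f'(1) by (simp add: vecs_def)
    have fv: "f \<in> vecs (Suc n)" unfolding f_def using f'(1) by (auto simp: vecs_def)
    have fnz: "f \<noteq> (\<lambda>k. 0)"
    proof
      assume "f = (\<lambda>k. 0)"
      then have "f' k = 0" for k
      proof (cases "k = n")
        case True then show ?thesis using f'(1) by (simp add: vecs_def)
      next
        case False then show ?thesis using fun_cong[OF \<open>f = (\<lambda>k. 0)\<close>, of k] unfolding f_def by simp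
      qed
      then show False using f'(2) by (simp add: fun_eq_iff)
    qed
    have d0: "dotp (Suc n) f v0 = 0" unfolding dS al_def using v0(2) by simp
    have "dotp (Suc n) f v = 0" if v: "v \<in> V" for v
    proof (cases "v = v0")
      case True then show ?thesis using d0 by simp
    next
      case False
      then have "pr v \<in> V'" unfolding V'_def using v by blast
      then have z: "dotp n f' (pr v) = 0" using f'(3) by blast
      have pn: "pr v n = 0" unfolding pr_def using v0(2) by simp
      have "v = (\<lambda>k. pr v k + (v n / v0 n) * v0 k)" unfolding pr_def by simp
      then have "dotp (Suc n) f v = dotp (Suc n) f (\<lambda>k. pr v k + (v n / v0 n) * v0 k)" by simp
      also have "\<dots> = dotp (Suc n) f (pr v) + (v n / v0 n) * dotp (Suc n) f v0"
        by (simp only: dotp_add dotp_smul)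
      also have "dotp (Suc n) f (pr v) = 0" unfolding dS pn z by simp
      finally show ?thesis using d0 by simp
    qed
    then show ?thesis using fv fnz by blast
  qed
qed

lemma avoid_hyperplanes:
  assumes "finite Fs" "\<forall>f\<in>Fs. f \<in> vecs n \<and> f \<noteq> (\<lambda>k. 0)"
  shows "\<exists>w\<in>vecs n. \<forall>f\<in>Fs. dotp n f w \<noteq> 0"
  using assms
proof (induction Fs rule: finite_induct)
  case empty
  then show ?case by (intro bexI[of _ "\<lambda>k. 0"]) (auto simp: vecs_def)
next
  case (insert g Fs)
  have "\<forall>f\<in>Fs. f \<in> vecs n \<and> f \<noteq> (\<lambda>k. 0)" using insert.prems by simp
  then obtain w where w: "w \<in> vecs n" "\<forall>f\<in>Fs. dotp n f w \<noteq> 0" using insert.IH by blast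
  have g: "g \<in> vecs n" "g \<noteq> (\<lambda>k. 0)" using insert.prems by simp_all
  obtain j where j: "g j \<noteq> 0" using g(2) by auto
  have jn: "j < n" by (rule ccontr) (use g(1) j in \<open>auto simp: vecs_def\<close>)
  define e :: "nat \<Rightarrow> real" where "e = (\<lambda>k. if k = j then 1 else 0)"
  have ev: "e \<in> vecs n" unfolding e_def vecs_def using jn by auto
  have ge: "dotp n g e = g j"
  proof -
    have "(\<Sum>ja<n. g ja * (if ja = j then 1 else 0)) = (\<Sum>ja<n. if ja = j then g ja else 0)"
      by (rule sum.cong) auto
    then show ?thesis unfolding dotp_def e_def using jn by simp
  qed
  define bad where "bad = insert 0 ((\<lambda>f. - dotp n f w / dotp n f e) ` insert g Fs)"
  have "finite bad" unfolding bad_def using insert.hyps(1) by simp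
  then obtain c :: real where c: "c \<notin> bad" using ex_new_if_finite[OF infinite_UNIV_char_0] by blast
  define w' where "w' = (\<lambda>k. w k + c * e k)"
  have w'v: "w' \<in> vecs n" unfolding w'_def using w(1) ev by (auto simp: vecs_def)
  have dw': "dotp n f w' = dotp n f w + c * dotp n f e" for f
    unfolding w'_def by (simp add: dotp_add dotp_smul)
  have "dotp n f w' \<noteq> 0" if f: "f \<in> insert g Fs" for f
  proof (cases "f \<in> Fs")
    case True
    show ?thesis
    proof
      assume "dotp n f w' = 0"
      then have h: "dotp n f w + c * dotp n f e = 0" using dw' by simp
      show False
      proof (cases "dotp n f e = 0")
        case True then show False using h w(2) \<open>f \<in> Fs\<close> by simp
      next
        case False
        then have "c = - dotp n f w / dotp n f e" using h by (simp add: field_simps eq_neg_iff_add_eq_0)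
        then show False using c \<open>f \<in> Fs\<close> unfolding bad_def by auto
      qed
    qed
  next
    case False
    then have "f = g" using f by simp
    show ?thesis
    proof (cases "dotp n g w = 0")
      case True
      then have "dotp n g w' = c * g j" using dw' ge by simp
      moreover have "c \<noteq> 0" using c unfolding bad_def by auto
      ultimately show ?thesis using j \<open>f = g\<close> by simp
    next
      case False
      show ?thesis
      proof
        assume "dotp n f w' = 0"
        then have "c = - dotp n g w / dotp n g e" using dw' \<open>f = g\<close> ge j
          by (simp add: field_simps eq_neg_iff_add_eq_0)
        then show False using c unfolding bad_def by auto
      qed
    qed
  qed
  then show ?case using w'v by blast
qed


lemma BW_seqs:
  fixes S :: "(nat \<Rightarrow> real) set"
  shows "finite S \<Longrightarrow> (\<forall>X\<in>S. Bseq X) \<Longrightarrow> \<exists>r. strict_mono r \<and> (\<forall>X\<in>S. convergent (\<lambda>j. X (r j)))"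
proof (induction S rule: finite_induct)
  case empty
  then show ?case by (intro exI[of _ id]) (auto simp: strict_mono_def)
next
  case (insert X S)
  then obtain r where r: "strict_mono r" "\<forall>Y\<in>S. convergent (\<lambda>j. Y (r j))" by auto
  obtain f where f: "strict_mono f" "monoseq (\<lambda>n. X (r (f n)))" using seq_monosub[of "\<lambda>j. X (r j)"] by blast
  have "Bseq (\<lambda>n. X (r (f n)))" using insert.prems Bseq_subseq[of X "\<lambda>n. r (f n)"] by simp
  then have cX: "convergent (\<lambda>n. X (r (f n)))" using f(2) by (rule Bseq_monoseq_convergent)
  have "convergent (\<lambda>j. Y (r (f j)))" if "Y \<in> S" for Y
    using convergent_subseq_convergent[OF r(2)[rule_format, OF that] f(1)] by (simp add: comp_def)
  moreover have "strict_mono (\<lambda>j. r (f j))" using strict_mono_o[OF r(1) f(1)] by (simp add: comp_def)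
  ultimately show ?case using cX by (intro exI[of _ "\<lambda>j. r (f j)"]) auto
qed

lemma ray_gap:
  fixes x :: "nat \<Rightarrow> nat \<Rightarrow> real" and p dz w :: "nat \<Rightarrow> real"
  assumes fH: "finite H" and rz: "dz rz \<noteq> 0"
    and nohit: "\<And>t. 0 \<le> t \<Longrightarrow> (\<lambda>k. p k + t * dz k) \<notin> conv_pts x H"
  shows "\<exists>\<epsilon>>0. \<forall>s. 0 < s \<and> s < \<epsilon> \<longrightarrow> \<not> (\<exists>t\<ge>0. (\<lambda>k. p k + t * (dz k + s * w k)) \<in> conv_pts x H)"
proof (rule ccontr)
  define hits where "hits s = (\<exists>t\<ge>0. (\<lambda>k. p k + t * (dz k + s * w k)) \<in> conv_pts x H)" for s
  assume "\<not> (\<exists>\<epsilon>>0. \<forall>s. 0 < s \<and> s < \<epsilon> \<longrightarrow> \<not> (\<exists>t\<ge>0. (\<lambda>k. p k + t * (dz k + s * w k)) \<in> conv_pts x H))"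
  then have H: "\<forall>\<epsilon>>0. \<exists>s. 0 < s \<and> s < \<epsilon> \<and> hits s" unfolding hits_def by blast
  define e0 where "e0 = \<bar>dz rz\<bar> / (2 * (\<bar>w rz\<bar> + 1))"
  have e0: "e0 > 0" unfolding e0_def using rz by (simp add: add_pos_nonneg)
  define sq where "sq j = (SOME s. 0 < s \<and> s < min e0 (1 / (real j + 1)) \<and> hits s)" for j
  have sq: "0 < sq j \<and> sq j < min e0 (1 / (real j + 1)) \<and> hits (sq j)" for j
  proof -
    have "min e0 (1 / (real j + 1)) > 0" using e0 by simp
    then show ?thesis unfolding sq_def using H by (metis (mono_tags, lifting) someI_ex)
  qed
  define cv where "cv s = (SOME tl. 0 \<le> fst tl \<and> (\<forall>u\<in>H. 0 \<le> snd tl u) \<and> sum (snd tl) H = 1 \<and>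
      (\<lambda>k. p k + fst tl * (dz k + s * w k)) = (\<lambda>k. \<Sum>u\<in>H. snd tl u * x u k))" for s
  have cv: "0 \<le> fst (cv (sq j)) \<and> (\<forall>u\<in>H. 0 \<le> snd (cv (sq j)) u) \<and> sum (snd (cv (sq j))) H = 1 \<and>
      (\<lambda>k. p k + fst (cv (sq j)) * (dz k + sq j * w k)) = (\<lambda>k. \<Sum>u\<in>H. snd (cv (sq j)) u * x u k)" for j
  proof -
    have "hits (sq j)" using sq by blast
    then obtain t l where "0 \<le> t" "\<forall>u\<in>H. 0 \<le> l u" "sum l H = 1"
      "(\<lambda>k. p k + t * (dz k + sq j * w k)) = (\<lambda>k. \<Sum>u\<in>H. l u * x u k)"
      unfolding hits_def conv_pts_def by blast
    then have "\<exists>tl. 0 \<le> fst tl \<and> (\<forall>u\<in>H. 0 \<le> snd tl u) \<and> sum (snd tl) H = 1 \<and>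
      (\<lambda>k. p k + fst tl * (dz k + sq j * w k)) = (\<lambda>k. \<Sum>u\<in>H. snd tl u * x u k)"
      by (intro exI[of _ "(t, l)"]) simp
    then show ?thesis unfolding cv_def by (rule someI_ex)
  qed
  define tt where "tt j = fst (cv (sq j))" for j
  define ll where "ll j = snd (cv (sq j))" for j
  have tt0: "0 \<le> tt j" for j using cv unfolding tt_def by blast
  have ll0: "\<forall>u\<in>H. 0 \<le> ll j u" for j using cv unfolding ll_def by blast
  have ll1: "sum (ll j) H = 1" for j using cv unfolding ll_def by blast
  have eqj: "p k + tt j * (dz k + sq j * w k) = (\<Sum>u\<in>H. ll j u * x u k)" for j k
    using cv[of j] unfolding tt_def ll_def by (metis (no_types, lifting))
  have llb: "ll j u \<le> 1" if "u \<in> H" for j u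
  proof -
    have "ll j u \<le> sum (ll j) H" by (rule member_le_sum) (use that ll0 fH in auto)
    then show ?thesis using ll1 by simp
  qed
  define C where "C = (\<Sum>u\<in>H. \<bar>x u rz\<bar>) + \<bar>p rz\<bar>"
  have ttb: "tt j \<le> 2 * C / \<bar>dz rz\<bar>" for j
  proof -
    have sj: "sq j * \<bar>w rz\<bar> \<le> \<bar>dz rz\<bar> / 2"
    proof -
      have "sq j * \<bar>w rz\<bar> \<le> e0 * (\<bar>w rz\<bar> + 1)"
        using sq[of j] by (intro mult_mono) auto
      also have "\<dots> = \<bar>dz rz\<bar> / 2" unfolding e0_def by (simp add: field_simps)
      finally show ?thesis .
    qed
    have dd: "\<bar>dz rz\<bar> / 2 \<le> \<bar>dz rz + sq j * w rz\<bar>"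
    proof -
      have "\<bar>sq j * w rz\<bar> = sq j * \<bar>w rz\<bar>" using sq[of j] by (simp add: abs_mult)
      then show ?thesis using sj by linarith
    qed
    have "\<bar>tt j * (dz rz + sq j * w rz)\<bar> = \<bar>(\<Sum>u\<in>H. ll j u * x u rz) - p rz\<bar>"
    proof -
      have "p rz + tt j * (dz rz + sq j * w rz) = (\<Sum>u\<in>H. ll j u * x u rz)" by (rule eqj)
      then have "tt j * (dz rz + sq j * w rz) = (\<Sum>u\<in>H. ll j u * x u rz) - p rz" by (simp add: algebra_simps)
      then show ?thesis by simp
    qed
    also have "\<dots> \<le> \<bar>\<Sum>u\<in>H. ll j u * x u rz\<bar> + \<bar>p rz\<bar>" by (rule abs_triangle_ineq4)
    also have "\<bar>\<Sum>u\<in>H. ll j u * x u rz\<bar> \<le> (\<Sum>u\<in>H. \<bar>ll j u * x u rz\<bar>)" by (rule sum_abs)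
    also have "\<dots> \<le> (\<Sum>u\<in>H. \<bar>x u rz\<bar>)"
    proof (rule sum_mono)
      fix u assume "u \<in> H"
      then have "0 \<le> ll j u" "ll j u \<le> 1" using ll0 llb by auto
      then show "\<bar>ll j u * x u rz\<bar> \<le> \<bar>x u rz\<bar>" by (simp add: abs_mult mult_left_le_one_le)
    qed
    finally have "\<bar>tt j * (dz rz + sq j * w rz)\<bar> \<le> C" unfolding C_def by simp
    then have "tt j * (\<bar>dz rz\<bar> / 2) \<le> C"
      using dd tt0[of j] by (metis abs_mult abs_of_nonneg mult_left_mono order_trans)
    then show ?thesis using rz by (simp add: field_simps)
  qed
  define S where "S = insert tt ((\<lambda>u j. ll j u) ` H)"
  have "finite S" unfolding S_def using fH by simp
  moreover have "\<forall>X\<in>S. Bseq X"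
  proof
    fix X assume "X \<in> S"
    then consider "X = tt" | u where "u \<in> H" "X = (\<lambda>j. ll j u)" unfolding S_def by blast
    then show "Bseq X"
    proof cases
      case 1 then show ?thesis using tt0 ttb by (intro BseqI'[of _ "2 * C / \<bar>dz rz\<bar>"]) auto
    next
      case (2 u) then show ?thesis using ll0 llb by (intro BseqI'[of _ 1]) auto
    qed
  qed
  ultimately obtain r where r: "strict_mono r" "\<forall>X\<in>S. convergent (\<lambda>j. X (r j))"
    using BW_seqs by blast
  define T where "T = lim (\<lambda>j. tt (r j))"
  define L where "L u = lim (\<lambda>j. ll (r j) u)" for u
  have tT: "(\<lambda>j. tt (r j)) \<longlonglongrightarrow> T" unfolding T_def using r(2) S_def by (simp add: convergent_LIMSEQ_iff)
  have lL: "(\<lambda>j. ll (r j) u) \<longlonglongrightarrow> L u" if "u \<in> H" for u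
    unfolding L_def using r(2) S_def that by (simp add: convergent_LIMSEQ_iff)
  have s0: "(\<lambda>j. sq (r j)) \<longlonglongrightarrow> 0"
  proof -
    have "(\<lambda>j. sq j) \<longlonglongrightarrow> 0"
    proof (rule real_tendsto_sandwich[of "\<lambda>j. 0" _ _ "\<lambda>j. 1 / (real j + 1)"])
      show "\<forall>\<^sub>F j in sequentially. 0 \<le> sq j" using sq by (simp add: less_imp_le)
      have "sq j \<le> 1 / (real j + 1)" for j using sq[of j] by simp
      then show "\<forall>\<^sub>F j in sequentially. sq j \<le> 1 / (real j + 1)" by simp
      show "(\<lambda>j. 0) \<longlonglongrightarrow> (0::real)" by simp
      show "(\<lambda>j. 1 / (real j + 1)) \<longlonglongrightarrow> (0::real)"
        using LIMSEQ_inverse_real_of_nat by (simp add: inverse_eq_divide add.commute)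
    qed
    then show ?thesis using LIMSEQ_subseq_LIMSEQ[OF _ r(1)] by (simp add: comp_def)
  qed
  have T0: "0 \<le> T" using tT tt0 by (intro LIMSEQ_le_const) auto
  have L0: "0 \<le> L u" if "u \<in> H" for u using lL[OF that] ll0 that by (intro LIMSEQ_le_const) auto
  have L1: "sum L H = 1"
  proof -
    have "(\<lambda>j. sum (ll (r j)) H) \<longlonglongrightarrow> sum L H" using lL by (intro tendsto_sum) auto
    moreover have "(\<lambda>j. sum (ll (r j)) H) = (\<lambda>j. 1)" using ll1 by simp
    ultimately show ?thesis using LIMSEQ_unique[OF _ tendsto_const] by metis
  qed
  have eqL: "p k + T * dz k = (\<Sum>u\<in>H. L u * x u k)" for k
  proof -
    have "(\<lambda>j. p k + tt (r j) * (dz k + sq (r j) * w k)) \<longlonglongrightarrow> p k + T * (dz k + 0 * w k)"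
      by (intro tendsto_intros tT s0)
    moreover have "(\<lambda>j. \<Sum>u\<in>H. ll (r j) u * x u k) \<longlonglongrightarrow> (\<Sum>u\<in>H. L u * x u k)"
      using lL by (intro tendsto_intros) auto
    moreover have "(\<lambda>j. p k + tt (r j) * (dz k + sq (r j) * w k)) = (\<lambda>j. \<Sum>u\<in>H. ll (r j) u * x u k)"
      using eqj by simp
    ultimately show ?thesis using LIMSEQ_unique by fastforce
  qed
  have "(\<lambda>k. p k + T * dz k) \<in> conv_pts x H"
    unfolding conv_pts_def using L0 L1 eqL by (intro CollectI exI[of _ L]) (auto simp: fun_eq_iff)
  then show False using nohit[OF T0] by simp
qed


lemma conv_single: "conv_pts x {u} = {x u}"
proof -
  have "x u \<in> conv_pts x {u}" unfolding conv_pts_def by (intro CollectI exI[of _ "\<lambda>_. 1"]) auto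
  moreover have "y = x u" if "y \<in> conv_pts x {u}" for y using that unfolding conv_pts_def by auto
  ultimately show ?thesis by blast
qed

lemma conv_empty: "conv_pts x {} = {}"
  unfolding conv_pts_def by auto

lemma purity:
  assumes K: "star_shaped_sphere n m K" and k: "k \<in> {1..m}"
  shows "\<exists>F\<in>K. card F = n \<and> k \<in> F"
proof (rule ccontr)
  assume neg: "\<not> (\<exists>F\<in>K. card F = n \<and> k \<in> F)"
  have sc: "simplicial_complex_on m K"
    using K unfolding star_shaped_sphere_def by (elim conjE) assumption
  have cle: "\<forall>\<sigma>\<in>K. card \<sigma> \<le> n"
    using K unfolding star_shaped_sphere_def by (elim conjE) assumption
  have cex: "\<exists>\<sigma>\<in>K. card \<sigma> = n"
    using K unfolding star_shaped_sphere_def by (elim conjE) assumption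
  have geo: "\<exists>x p. geom_realization n K x \<and> p \<in> vecs n \<and>
        (\<forall>d\<in>vecs n. d \<noteq> (\<lambda>k. 0) \<longrightarrow>
           (\<exists>!y. y \<in> polyhedron K x \<and> (\<exists>t::real. 0 \<le> t \<and> y = (\<lambda>k. p k + t * d k))))"
    using K unfolding star_shaped_sphere_def by (elim conjE) assumption
  then obtain x p where gr: "geom_realization n K x" and pv: "p \<in> vecs n"
    and RC: "\<And>d. d \<in> vecs n \<Longrightarrow> d \<noteq> (\<lambda>k. 0) \<Longrightarrow>
           (\<exists>!y. y \<in> polyhedron K x \<and> (\<exists>t::real. 0 \<le> t \<and> y = (\<lambda>k. p k + t * d k)))"
    by blast
  have Kpow: "K \<subseteq> Pow {1..m}" and Ksub: "\<And>\<sigma> \<tau>. \<sigma> \<in> K \<Longrightarrow> \<tau> \<subseteq> \<sigma> \<Longrightarrow> \<tau> \<in> K"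
    and Ksing: "\<And>i. i \<in> {1..m} \<Longrightarrow> {i} \<in> K"
    using sc unfolding simplicial_complex_on_def by blast+
  have finK: "finite K" using Kpow by (rule finite_subset) simp
  have finF: "finite \<sigma>" if "\<sigma> \<in> K" for \<sigma> using Kpow that by (auto intro: finite_subset)
  have xv: "x u \<in> vecs n" for u using gr unfolding geom_realization_def by blast
  have inter: "conv_pts x \<sigma> \<inter> conv_pts x \<tau> = conv_pts x (\<sigma> \<inter> \<tau>)" if "\<sigma> \<in> K" "\<tau> \<in> K" for \<sigma> \<tau>
    using gr that unfolding geom_realization_def by blast
  have convP: "conv_pts x \<sigma> \<subseteq> polyhedron K x" if "\<sigma> \<in> K" for \<sigma>
    using that unfolding polyhedron_def by blast
  have xP: "x u \<in> polyhedron K x" if "u \<in> {1..m}" for u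
    using convP[OF Ksing[OF that]] conv_single by blast
  have kK: "{k} \<in> K" using Ksing[OF k] .
  have "card {k} \<le> n" using cle kK by blast
  then have n1: "1 \<le> n" by simp
  have n2: "2 \<le> n"
  proof (rule ccontr)
    assume "\<not> 2 \<le> n" then have "n = 1" using n1 by simp
    then show False using neg kK by auto
  qed
  have ray_uniq: "y1 = y2" if "d \<in> vecs n" "d \<noteq> (\<lambda>k. 0)" "y1 \<in> polyhedron K x" "y2 \<in> polyhedron K x"
    "0 \<le> t1" "y1 = (\<lambda>k. p k + t1 * d k)" "0 \<le> t2" "y2 = (\<lambda>k. p k + t2 * d k)" for d y1 y2 t1 t2
    using RC[OF that(1,2)] that(3-8) by blast
  have pP: "p \<notin> polyhedron K x"
  proof
    assume pP: "p \<in> polyhedron K x"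
    obtain \<sigma> where \<sigma>: "\<sigma> \<in> K" "card \<sigma> = n" using cex by blast
    then have "1 < card \<sigma>" using n2 by simp
    then have "\<not> (\<forall>a\<in>\<sigma>. \<forall>b\<in>\<sigma>. a = b)" using card_le_Suc0_iff_eq[OF finF[OF \<sigma>(1)]] by simp
    then obtain u v where uv: "u \<in> \<sigma>" "v \<in> \<sigma>" "u \<noteq> v" by blast
    have "\<sigma> \<subseteq> {1..m}" using \<sigma>(1) Kpow by blast
    then have um: "u \<in> {1..m}" "v \<in> {1..m}" using uv by blast+
    have "conv_pts x {u} \<inter> conv_pts x {v} = conv_pts x ({u} \<inter> {v})"
      using inter Ksing um by blast
    then have "x u \<noteq> x v" using uv(3) by (simp add: conv_single conv_empty)
    then obtain z where z: "z \<in> {1..m}" "x z \<noteq> p" using um by metis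
    define d where "d = (\<lambda>j. x z j - p j)"
    have dv: "d \<in> vecs n" unfolding d_def using xv[of z] pv by (auto simp: vecs_def)
    have dnz: "d \<noteq> (\<lambda>k. 0)" unfolding d_def using z(2) by (auto simp: fun_eq_iff)
    have "p = x z"
      by (rule ray_uniq[OF dv dnz pP xP[OF z(1)], of 0 1]) (auto simp: d_def)
    then show False using z(2) by simp
  qed
  define d0 where "d0 = (\<lambda>j. x k j - p j)"
  have d0v: "d0 \<in> vecs n" unfolding d0_def using xv[of k] pv by (auto simp: vecs_def)
  have d0nz: "d0 \<noteq> (\<lambda>k. 0)"
  proof
    assume "d0 = (\<lambda>k. 0)"
    then have "x k = p" unfolding d0_def by (auto simp: fun_eq_iff)
    then show False using pP xP[OF k] by simp
  qed
  then obtain r0 where r0: "d0 r0 \<noteq> 0" by auto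
  define A where "A = {G \<in> K. k \<in> G}"
  define B where "B = {H \<in> K. k \<notin> H}"
  have fA: "finite A" and fB: "finite B" unfolding A_def B_def using finK by auto
  have cA: "card G < n" if "G \<in> A" for G using that neg cle unfolding A_def by (auto simp: le_less)
  have fex: "\<exists>f\<in>vecs n. f \<noteq> (\<lambda>k. 0) \<and> (\<forall>v\<in>(\<lambda>u j. x u j - p j) ` G. dotp n f v = 0)"
    if G: "G \<in> A" for G
  proof (rule homsol)
    have fG: "finite G" using G finF unfolding A_def by blast
    then show "finite ((\<lambda>u j. x u j - p j) ` G)" by simp
    show "card ((\<lambda>u j. x u j - p j) ` G) < n" using card_image_le[OF fG, of "\<lambda>u j. x u j - p j"] cA[OF G] by linarith
    show "(\<lambda>u j. x u j - p j) ` G \<subseteq> vecs n" using xv pv by (auto simp: vecs_def)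
  qed
  define fG where "fG G = (SOME f. f \<in> vecs n \<and> f \<noteq> (\<lambda>k. 0) \<and> (\<forall>u\<in>G. dotp n f (\<lambda>j. x u j - p j) = 0))" for G
  have fG: "fG G \<in> vecs n \<and> fG G \<noteq> (\<lambda>k. 0) \<and> (\<forall>u\<in>G. dotp n (fG G) (\<lambda>j. x u j - p j) = 0)"
    if "G \<in> A" for G
  proof -
    have "\<exists>f. f \<in> vecs n \<and> f \<noteq> (\<lambda>k. 0) \<and> (\<forall>u\<in>G. dotp n f (\<lambda>j. x u j - p j) = 0)"
      using fex[OF that] by blast
    then show ?thesis unfolding fG_def by (rule someI_ex)
  qed
  obtain w where wv: "w \<in> vecs n" and w: "\<forall>f\<in>fG ` A. dotp n f w \<noteq> 0"
    using avoid_hyperplanes[of "fG ` A" n] fA fG by auto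
  have nohit: "(\<lambda>k. p k + t * d0 k) \<notin> conv_pts x H" if H: "H \<in> B" "0 \<le> t" for H t
  proof
    assume y: "(\<lambda>k. p k + t * d0 k) \<in> conv_pts x H"
    have HK: "H \<in> K" using H unfolding B_def by simp
    have "(\<lambda>k. p k + t * d0 k) = x k"
      by (rule ray_uniq[OF d0v d0nz _ xP[OF k] H(2) refl, of 1]) (use y convP[OF HK] in \<open>auto simp: d0_def\<close>)
    then have "x k \<in> conv_pts x {k} \<inter> conv_pts x H" using y conv_single by auto
    also have "\<dots> = conv_pts x ({k} \<inter> H)" using inter[OF kK HK] .
    also have "{k} \<inter> H = {}" using H unfolding B_def by auto
    finally show False by (simp add: conv_empty)
  qed
  have epsex: "\<exists>\<epsilon>>0. \<forall>s. 0 < s \<and> s < \<epsilon> \<longrightarrow> \<not> (\<exists>t\<ge>0. (\<lambda>k. p k + t * (d0 k + s * w k)) \<in> conv_pts x H)"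
    if H: "H \<in> B" for H
  proof (rule ray_gap[where dz=d0 and rz=r0])
    show "finite H" using H finF unfolding B_def by blast
    show "d0 r0 \<noteq> 0" by (rule r0)
    show "(\<lambda>k. p k + t * d0 k) \<notin> conv_pts x H" if "0 \<le> t" for t using nohit[OF H that] .
  qed
  define eps where "eps H = (SOME \<epsilon>. \<epsilon> > 0 \<and> (\<forall>s. 0 < s \<and> s < \<epsilon> \<longrightarrow> \<not> (\<exists>t\<ge>0. (\<lambda>k. p k + t * (d0 k + s * w k)) \<in> conv_pts x H)))" for H
  have eps: "eps H > 0 \<and> (\<forall>s. 0 < s \<and> s < eps H \<longrightarrow> \<not> (\<exists>t\<ge>0. (\<lambda>k. p k + t * (d0 k + s * w k)) \<in> conv_pts x H))"
    if "H \<in> B" for H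
    unfolding eps_def by (rule someI_ex) (use epsex[OF that] in blast)
  define s where "s = Min (insert 1 (eps ` B)) / 2"
  have Mpos: "Min (insert 1 (eps ` B)) > 0" using fB eps by (subst Min_gr_iff) auto
  have s0: "0 < s" unfolding s_def using Mpos by simp
  have sB: "s < eps H" if "H \<in> B" for H
  proof -
    have "Min (insert 1 (eps ` B)) \<le> eps H" using fB that by (intro Min_le) auto
    then show ?thesis unfolding s_def using Mpos by simp
  qed
  define d where "d = (\<lambda>j. d0 j + s * w j)"
  have dv: "d \<in> vecs n" unfolding d_def using d0v wv by (auto simp: vecs_def)
  have dA: "dotp n (fG G) d = s * dotp n (fG G) w" if G: "G \<in> A" for G
  proof -
    have "dotp n (fG G) d0 = 0" using fG[OF G] G unfolding A_def d0_def by auto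
    then show ?thesis unfolding d_def by (simp add: dotp_add dotp_smul)
  qed
  have kA: "{k} \<in> A" unfolding A_def using kK by simp
  have dnz: "d \<noteq> (\<lambda>k. 0)"
  proof
    assume "d = (\<lambda>k. 0)"
    then have "dotp n (fG {k}) d = 0" by (simp add: dotp_def)
    then show False using dA[OF kA] s0 w kA by auto
  qed
  obtain y t where y: "y \<in> polyhedron K x" "0 \<le> t" "y = (\<lambda>k. p k + t * d k)" using RC[OF dv dnz] by blast
  then obtain G where G: "G \<in> K" "y \<in> conv_pts x G" unfolding polyhedron_def by blast
  show False
  proof (cases "k \<in> G")
    case True
    then have GA: "G \<in> A" unfolding A_def using G by simp
    obtain l where l: "\<forall>u\<in>G. 0 \<le> l u" "sum l G = 1" "y = (\<lambda>k. \<Sum>u\<in>G. l u * x u k)"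
      using G(2) unfolding conv_pts_def by blast
    define f where "f = fG G"
    have fx: "dotp n f (x u) = dotp n f p" if "u \<in> G" for u
    proof -
      have "dotp n f (\<lambda>j. x u j - p j) = 0" using fG[OF GA] that unfolding f_def by blast
      then show ?thesis by (simp add: dotp_diff)
    qed
    have "dotp n f y = (\<Sum>u\<in>G. l u * dotp n f (x u))" unfolding l(3) by (rule dotp_sum)
    also have "\<dots> = (\<Sum>u\<in>G. l u * dotp n f p)" using fx by simp
    also have "\<dots> = dotp n f p" using l(2) by (simp add: sum_distrib_right[symmetric])
    finally have e1: "dotp n f y = dotp n f p" .
    have "dotp n f y = dotp n f p + t * dotp n f d" unfolding y(3) by (simp add: dotp_add dotp_smul)
    then have "t * (s * dotp n f w) = 0" using e1 dA[OF GA] unfolding f_def by simp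
    moreover have "dotp n f w \<noteq> 0" using w GA unfolding f_def by blast
    ultimately have "t = 0" using s0 by simp
    then have "y = p" using y(3) by simp
    then show False using y(1) pP by simp
  next
    case False
    then have GB: "G \<in> B" unfolding B_def using G by simp
    have "\<exists>t\<ge>0. (\<lambda>k. p k + t * (d0 k + s * w k)) \<in> conv_pts x G"
      using y G(2) unfolding d_def by blast
    then show False using eps[OF GB] s0 sB[OF GB] by blast
  qed
qed


definition islin :: "nat \<Rightarrow> nat \<Rightarrow> ((nat \<Rightarrow> 'r::comm_ring_1) \<Rightarrow> (nat \<Rightarrow> 'r)) \<Rightarrow> bool" where
  "islin N N' f \<longleftrightarrow> (\<forall>x\<in>vecs N. f x \<in> vecs N') \<and>
     (\<forall>x\<in>vecs N. \<forall>y\<in>vecs N. f (\<lambda>k. x k + y k) = (\<lambda>k. f x k + f y k)) \<and>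
     (\<forall>c. \<forall>x\<in>vecs N. f (\<lambda>k. c * x k) = (\<lambda>k. c * f x k))"

definition unitv :: "nat \<Rightarrow> nat \<Rightarrow> 'r::comm_ring_1" where
  "unitv j = (\<lambda>k. if k = j then 1 else 0)"

lemma vecs_iff: "x \<in> vecs N \<longleftrightarrow> (\<forall>i\<ge>N. x i = 0)"
  by (auto simp: vecs_def)

lemma vecs_zero[simp]: "(\<lambda>k. 0::'r::zero) \<in> vecs N"
  by (auto simp: vecs_def)

lemma vecs_add[intro]: fixes x y :: "nat \<Rightarrow> 'r::comm_ring_1" shows "x \<in> vecs N \<Longrightarrow> y \<in> vecs N \<Longrightarrow> (\<lambda>k. x k + y k) \<in> vecs N"
  by (auto simp: vecs_def)

lemma vecs_diff[intro]: fixes x y :: "nat \<Rightarrow> 'r::comm_ring_1" shows "x \<in> vecs N \<Longrightarrow> y \<in> vecs N \<Longrightarrow> (\<lambda>k. x k - y k) \<in> vecs N"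
  by (auto simp: vecs_def)

lemma vecs_smul[intro]: fixes x y :: "nat \<Rightarrow> 'r::comm_ring_1" shows "x \<in> vecs N \<Longrightarrow> (\<lambda>k. c * x k) \<in> vecs N"
  by (auto simp: vecs_def)

lemma vecs_sum[intro]: fixes v :: "_ \<Rightarrow> nat \<Rightarrow> 'r::comm_ring_1" shows "(\<And>u. u \<in> S \<Longrightarrow> v u \<in> vecs N) \<Longrightarrow> (\<lambda>k. \<Sum>u\<in>S. c u * v u k) \<in> vecs N"
  by (auto simp: vecs_def intro!: sum.neutral)

lemma vecs_unitv[intro]: "j < N \<Longrightarrow> unitv j \<in> vecs N"
  by (auto simp: vecs_def unitv_def)

lemma lincomb_vecs[intro]: "(\<And>u. u \<in> S \<Longrightarrow> lam u \<in> vecs N) \<Longrightarrow> lincomb lam S c \<in> vecs N"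
  unfolding lincomb_def by (rule vecs_sum)

lemma mv_vecs[intro]: "mv M N U x \<in> vecs M"
  unfolding mv_def vecs_def by auto

lemma islin_mv: "islin N N' (mv N' N M)"
  unfolding islin_def
  apply (intro conjI ballI allI)
  apply (rule mv_vecs)
  by (auto simp: mv_def fun_eq_iff distrib_left sum.distrib sum_distrib_left ac_simps)

lemma islin_vecs: "islin N N' f \<Longrightarrow> x \<in> vecs N \<Longrightarrow> f x \<in> vecs N'"
  by (auto simp: islin_def)

lemma islin_add: "islin N N' f \<Longrightarrow> x \<in> vecs N \<Longrightarrow> y \<in> vecs N \<Longrightarrow> f (\<lambda>k. x k + y k) = (\<lambda>k. f x k + f y k)"
  by (auto simp: islin_def)

lemma islin_smul: "islin N N' f \<Longrightarrow> x \<in> vecs N \<Longrightarrow> f (\<lambda>k. c * x k) = (\<lambda>k. c * f x k)"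
  by (auto simp: islin_def)

lemma islin_zero: "islin N N' f \<Longrightarrow> f (\<lambda>k. 0) = (\<lambda>k. 0)"
  using islin_smul[of N N' f "\<lambda>k. 0" 0] by simp

lemma islin_diff: "islin N N' f \<Longrightarrow> x \<in> vecs N \<Longrightarrow> y \<in> vecs N \<Longrightarrow> f (\<lambda>k. x k - y k) = (\<lambda>k. f x k - f y k)"
proof -
  assume f: "islin N N' f" and x: "x \<in> vecs N" and y: "y \<in> vecs N"
  have "(\<lambda>k. x k - y k) = (\<lambda>k. x k + (-1) * y k)" by simp
  then show ?thesis using islin_add[OF f x vecs_smul[OF y, of "-1"]] islin_smul[OF f y, of "-1"]
    by simp
qed

lemma islin_sum:
  assumes f: "islin N N' f" and fin: "finite S" and v: "\<And>u. u \<in> S \<Longrightarrow> v u \<in> vecs N"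
  shows "f (\<lambda>k. \<Sum>u\<in>S. c u * v u k) = (\<lambda>k. \<Sum>u\<in>S. c u * f (v u) k)"
  using fin v
proof (induction S rule: finite_induct)
  case empty
  then show ?case using islin_zero[OF f] by simp
next
  case (insert x F)
  have "f (\<lambda>k. \<Sum>u\<in>insert x F. c u * v u k) = f (\<lambda>k. c x * v x k + (\<Sum>u\<in>F. c u * v u k))"
    using insert by simp
  also have "\<dots> = (\<lambda>k. f (\<lambda>k. c x * v x k) k + f (\<lambda>k. \<Sum>u\<in>F. c u * v u k) k)"
    using insert by (intro islin_add[OF f]) auto
  also have "\<dots> = (\<lambda>k. \<Sum>u\<in>insert x F. c u * f (v u) k)"
    using insert islin_smul[OF f, of "v x" "c x"] by auto
  finally show ?case .
qed

lemma lincomb_lin: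
  assumes f: "islin N N' f" and fin: "finite S" and v: "\<And>u. u \<in> S \<Longrightarrow> lam u \<in> vecs N"
  shows "lincomb (\<lambda>u. f (lam u)) S c = f (lincomb lam S c)"
  unfolding lincomb_def using islin_sum[OF f fin v] by simp

lemma vec_decomp: fixes x :: "nat \<Rightarrow> 'r::comm_ring_1" assumes x: "x \<in> vecs N" shows "x = (\<lambda>k. \<Sum>j<N. x j * unitv j k)"
  proof
    fix k show "x k = (\<Sum>j<N. x j * unitv j k)"
      using x by (cases "k < N") (auto simp: unitv_def vecs_def if_distrib cong: if_cong)
  qed

lemma islin_matrix:
  assumes f: "islin N N' f"
  shows "\<exists>M. \<forall>x\<in>vecs N. mv N' N M x = f x"
proof -
  define M where "M = (\<lambda>i j. f (unitv j) i)"
  have "mv N' N M x = f x" if x: "x \<in> vecs N" for x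
  proof -
    have "f x = f (\<lambda>k. \<Sum>j\<in>{..<N}. x j * unitv j k)" using vec_decomp[OF x] by simp
    also have "\<dots> = (\<lambda>k. \<Sum>j\<in>{..<N}. x j * f (unitv j) k)"
      by (rule islin_sum[OF f]) auto
    finally have fx: "f x = (\<lambda>k. \<Sum>j<N. x j * f (unitv j) k)" .
    have fxv: "f x \<in> vecs N'" using f x by (auto simp: islin_def)
    show ?thesis
    proof
      fix i show "mv N' N M x i = f x i"
      proof (cases "i < N'")
        case True then show ?thesis by (simp add: mv_def M_def fx mult.commute)
      next
        case False then show ?thesis using fxv by (simp add: mv_def vecs_def)
      qed
    qed
  qed
  then show ?thesis by blast
qed

lemma islin_comp: "islin N N' f \<Longrightarrow> islin N' N'' g \<Longrightarrow> islin N N'' (\<lambda>x. g (f x))"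
  unfolding islin_def by auto

lemma islin_cong: "islin N N' f \<Longrightarrow> (\<And>x. x \<in> vecs N \<Longrightarrow> g x = f x) \<Longrightarrow> islin N N' g"
  unfolding islin_def by (simp add: vecs_add vecs_smul)

definition supp_on :: "'v set \<Rightarrow> ('v \<Rightarrow> 'r::zero) set" where
  "supp_on S = {c. \<forall>u. u \<notin> S \<longrightarrow> c u = 0}"

lemma lincomb_cong: "(\<And>u. u \<in> S \<Longrightarrow> c u = c' u) \<Longrightarrow> lincomb lam S c = lincomb lam S c'"
  unfolding lincomb_def by (auto intro!: sum.cong)

lemma lincomb_cong_lam: "(\<And>u. u \<in> S \<Longrightarrow> lam u = lam' u) \<Longrightarrow> lincomb lam S c = lincomb lam' S c"
  unfolding lincomb_def by (auto intro!: sum.cong)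

lemma lincomb_add: "lincomb lam S (\<lambda>u. c u + d u) = (\<lambda>k. lincomb lam S c k + lincomb lam S d k)"
  unfolding lincomb_def by (auto simp: distrib_right sum.distrib)

lemma lincomb_diff: "lincomb lam S (\<lambda>u. c u - d u) = (\<lambda>k. lincomb lam S c k - lincomb lam S d k)"
  unfolding lincomb_def by (auto simp: left_diff_distrib sum_subtractf)

lemma lincomb_smul: "lincomb lam S (\<lambda>u. a * c u) = (\<lambda>k. a * lincomb lam S c k)"
  unfolding lincomb_def by (auto simp: sum_distrib_left ac_simps)

lemma lincomb_zero: "lincomb lam S (\<lambda>u. 0) = (\<lambda>k. 0)"
  unfolding lincomb_def by auto

lemma lincomb_empty[simp]: "lincomb lam {} c = (\<lambda>k. 0)"
  unfolding lincomb_def by auto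

lemma lincomb_union:
  "finite S \<Longrightarrow> finite B \<Longrightarrow> S \<inter> B = {} \<Longrightarrow>
    lincomb lam (S \<union> B) c = (\<lambda>k. lincomb lam S c k + lincomb lam B c k)"
  unfolding lincomb_def by (auto simp: sum.union_disjoint)

lemma lincomb_delta:
  assumes "finite S" "u \<in> S"
  shows "lincomb lam S (\<lambda>v. if v = u then 1 else 0) = lam u"
proof
  fix k
  have e: "(if v = u then 1 else 0) * lam v k = (if v = u then lam v k else 0)" for v by simp
  show "lincomb lam S (\<lambda>v. if v = u then 1 else 0) k = lam u k"
    unfolding lincomb_def e using assms by simp
qed

lemma lincomb_reindex:
  "inj_on g S \<Longrightarrow> lincomb lam (g ` S) c = lincomb (\<lambda>u. lam (g u)) S (\<lambda>u. c (g u))"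
  unfolding lincomb_def by (auto simp: sum.reindex)

lemma rspan_empty[simp]: "rspan lam {} = {(\<lambda>k. 0)}"
  unfolding rspan_def by auto

lemma basis_vecs:
  assumes "is_basis N lam S" "finite S" "u \<in> S"
  shows "lam u \<in> vecs N"
proof -
  have "lincomb lam S (\<lambda>v. if v = u then 1 else 0) \<in> vecs N"
    using assms(1,3) unfolding is_basis_def bij_betw_def by auto
  then show ?thesis using lincomb_delta[OF assms(2,3), of lam] by simp
qed

lemma basis_rep:
  assumes "is_basis N lam S" "x \<in> vecs N"
  shows "\<exists>c. (\<forall>u. u \<notin> S \<longrightarrow> c u = 0) \<and> lincomb lam S c = x"
proof -
  have "x \<in> lincomb lam S ` {c. \<forall>u. u \<notin> S \<longrightarrow> c u = 0}"
    using assms unfolding is_basis_def bij_betw_def by simp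
  then show ?thesis by blast
qed

lemma basis_uniq:
  assumes "is_basis N lam S" "\<forall>u. u \<notin> S \<longrightarrow> c u = 0" "\<forall>u. u \<notin> S \<longrightarrow> c' u = 0"
    "lincomb lam S c = lincomb lam S c'"
  shows "c = c'"
proof -
  have "inj_on (lincomb lam S) {c. \<forall>u. u \<notin> S \<longrightarrow> c u = 0}"
    using assms(1) unfolding is_basis_def bij_betw_def by simp
  then show ?thesis using inj_onD[of "lincomb lam S" _ c c'] assms(2-4) by auto
qed

lemma basis_indep:
  assumes "is_basis N lam S" "lincomb lam S c = (\<lambda>k. 0)" "u \<in> S"
  shows "c u = 0"
proof -
  have l: "lincomb lam S (\<lambda>v. if v \<in> S then c v else 0) = lincomb lam S (\<lambda>v. 0)"
    using assms(2) lincomb_zero[of lam S] lincomb_cong[of S "\<lambda>v. if v \<in> S then c v else 0" c lam]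
    by simp
  have "(\<lambda>v. if v \<in> S then c v else 0) = (\<lambda>v. 0)"
    by (rule basis_uniq[OF assms(1) _ _ l]) auto
  then have "(if u \<in> S then c u else 0) = 0" by (rule fun_cong)
  then show ?thesis using assms(3) by simp
qed

lemma basis_extend:
  fixes lam g :: "'v \<Rightarrow> nat \<Rightarrow> 'r::comm_ring_1"
  assumes B: "is_basis N lam S" and fin: "finite S" and g: "\<And>u. u \<in> S \<Longrightarrow> g u \<in> vecs N'"
  shows "\<exists>f. islin N N' f \<and> (\<forall>u\<in>S. f (lam u) = g u)"
proof -
  define co where "co x = (SOME c. (\<forall>u. u \<notin> S \<longrightarrow> c u = 0) \<and> lincomb lam S c = x)" for x
  have co: "(\<forall>u. u \<notin> S \<longrightarrow> co x u = 0) \<and> lincomb lam S (co x) = x" if "x \<in> vecs N" for x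
    unfolding co_def by (rule someI_ex[OF basis_rep[OF B that]])
  have co_eq: "co x = c" if "x \<in> vecs N" "\<forall>u. u \<notin> S \<longrightarrow> c u = 0" "lincomb lam S c = x" for x c
    using basis_uniq[OF B _ that(2)] co[OF that(1)] that(3) by auto
  have lv: "lam u \<in> vecs N" if "u \<in> S" for u using basis_vecs[OF B fin that] .
  define f where "f x = (\<lambda>k. \<Sum>u\<in>S. co x u * g u k)" for x
  have "islin N N' f"
    unfolding islin_def
  proof (intro conjI ballI allI)
    fix x :: "nat \<Rightarrow> 'r" assume "x \<in> vecs N" then show "f x \<in> vecs N'" unfolding f_def using g by auto
  next
    fix x y :: "nat \<Rightarrow> 'r" assume x: "x \<in> vecs N" and y: "y \<in> vecs N"
    have "co (\<lambda>k. x k + y k) = (\<lambda>u. co x u + co y u)"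
      by (rule co_eq) (use co[OF x] co[OF y] x y in \<open>auto simp: lincomb_add\<close>)
    then show "f (\<lambda>k. x k + y k) = (\<lambda>k. f x k + f y k)"
      unfolding f_def by (auto simp: distrib_right sum.distrib)
  next
    fix c :: 'r and x :: "nat \<Rightarrow> 'r" assume x: "x \<in> vecs N"
    have "co (\<lambda>k. c * x k) = (\<lambda>u. c * co x u)"
      by (rule co_eq) (use co[OF x] x in \<open>auto simp: lincomb_smul\<close>)
    then show "f (\<lambda>k. c * x k) = (\<lambda>k. c * f x k)"
      unfolding f_def by (auto simp: sum_distrib_left ac_simps)
  qed
  moreover have "f (lam u) = g u" if u: "u \<in> S" for u
  proof -
    have "co (lam u) = (\<lambda>v. if v = u then 1 else 0)"
      by (rule co_eq) (use lv[OF u] u lincomb_delta[OF fin u] in auto)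
    moreover have "(if v = u then 1 else 0) * g v k = (if v = u then g v k else 0)" for v k by simp
    ultimately show ?thesis unfolding f_def using fin u by simp
  qed
  ultimately show ?thesis by blast
qed

lemma basis_quot:
  fixes lam :: "'v \<Rightarrow> nat \<Rightarrow> 'r::comm_ring_1"
  assumes B: "is_basis N lam (S \<union> B)" and disj: "S \<inter> B = {}" and fS: "finite S" and fB: "finite B"
    and f: "islin N N' f" and surj: "\<forall>y\<in>vecs N'. \<exists>x\<in>vecs N. f x = y"
    and ker: "\<forall>x\<in>vecs N. f x = (\<lambda>k. 0) \<longleftrightarrow> x \<in> rspan lam S"
  shows "is_basis N' (\<lambda>u. f (lam u)) B"
proof -
  have fin: "finite (S \<union> B)" using fS fB by auto
  have lv: "lam u \<in> vecs N" if "u \<in> S \<union> B" for u using basis_vecs[OF B fin that] .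
  have lcB: "lincomb (\<lambda>u. f (lam u)) B c = f (lincomb lam B c)" for c
    by (rule lincomb_lin[OF f fB]) (use lv in auto)
  show ?thesis unfolding is_basis_def bij_betw_def
  proof (intro conjI)
    show "inj_on (lincomb (\<lambda>u. f (lam u)) B) {c. \<forall>u. u \<notin> B \<longrightarrow> c u = 0}"
    proof (rule inj_onI)
      fix c c' assume c: "c \<in> {c. \<forall>u. u \<notin> B \<longrightarrow> c u = 0}" and c': "c' \<in> {c. \<forall>u. u \<notin> B \<longrightarrow> c u = 0}"
        and eq: "lincomb (\<lambda>u. f (lam u)) B c = lincomb (\<lambda>u. f (lam u)) B c'"
      have v1: "lincomb lam B c \<in> vecs N" "lincomb lam B c' \<in> vecs N" using lv by auto
      have "f (lincomb lam B (\<lambda>u. c u - c' u)) = (\<lambda>k. 0)"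
        using eq unfolding lcB lincomb_diff by (simp add: islin_diff[OF f v1])
      moreover have "lincomb lam B (\<lambda>u. c u - c' u) \<in> vecs N" using lv by auto
      ultimately obtain d where d: "lincomb lam B (\<lambda>u. c u - c' u) = lincomb lam S d"
        using ker unfolding rspan_def by auto
      define e where "e u = (if u \<in> B then c u - c' u else if u \<in> S then - d u else 0)" for u
      have "lincomb lam (S \<union> B) e = (\<lambda>k. lincomb lam S e k + lincomb lam B e k)"
        by (rule lincomb_union[OF fS fB disj])
      also have "lincomb lam S e = lincomb lam S (\<lambda>u. - d u)"
        by (rule lincomb_cong) (use disj in \<open>auto simp: e_def\<close>)
      also have "lincomb lam B e = lincomb lam B (\<lambda>u. c u - c' u)"
        by (rule lincomb_cong) (auto simp: e_def)
      finally have "lincomb lam (S \<union> B) e = (\<lambda>k. 0)"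
        using d lincomb_smul[of lam S "-1" d] by (auto simp: fun_eq_iff)
      then have "e u = 0" if "u \<in> S \<union> B" for u using basis_indep[OF B _ that] by blast
      then show "c = c'" using c c' by (auto simp: e_def fun_eq_iff) (metis eq_iff_diff_eq_0)
    qed
  next
    show "lincomb (\<lambda>u. f (lam u)) B ` {c. \<forall>u. u \<notin> B \<longrightarrow> c u = 0} = vecs N'"
    proof (intro equalityI subsetI)
      fix y assume "y \<in> lincomb (\<lambda>u. f (lam u)) B ` {c. \<forall>u. u \<notin> B \<longrightarrow> c u = 0}"
      then obtain c where "y = f (lincomb lam B c)" using lcB by auto
      moreover have "lincomb lam B c \<in> vecs N" using lv by (intro lincomb_vecs) auto
      ultimately show "y \<in> vecs N'" using islin_vecs[OF f] by auto
    next
      fix y :: "nat \<Rightarrow> 'r" assume y: "y \<in> vecs N'"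
      then obtain x where x: "x \<in> vecs N" "f x = y" using surj by auto
      obtain c where c: "lincomb lam (S \<union> B) c = x" using basis_rep[OF B x(1)] by auto
      have sp: "lincomb lam S c \<in> vecs N" "lincomb lam B c \<in> vecs N" using lv by auto
      have "f (lincomb lam S c) = (\<lambda>k. 0)" using ker sp(1) unfolding rspan_def by auto
      then have "y = f (lincomb lam B c)"
        using x c lincomb_union[OF fS fB disj, of lam c] islin_add[OF f sp] by auto
      also have "\<dots> = lincomb (\<lambda>u. f (lam u)) B (\<lambda>u. if u \<in> B then c u else 0)"
        unfolding lcB by (rule arg_cong[where f=f], rule lincomb_cong) auto
      finally show "y \<in> lincomb (\<lambda>u. f (lam u)) B ` {c. \<forall>u. u \<notin> B \<longrightarrow> c u = 0}" by auto
    qed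
  qed
qed


lemma rspanI: "lincomb lam S c = x \<Longrightarrow> x \<in> rspan lam S"
  unfolding rspan_def by auto

lemma rspanE: "x \<in> rspan lam S \<Longrightarrow> (\<And>c. x = lincomb lam S c \<Longrightarrow> P) \<Longrightarrow> P"
  unfolding rspan_def by auto

lemma rspan_add: fixes lam :: "'v \<Rightarrow> nat \<Rightarrow> 'r::comm_ring_1"
  assumes "x \<in> rspan lam S" "y \<in> rspan lam S" shows "(\<lambda>k. x k + y k) \<in> rspan lam S"
proof -
  obtain c d where "x = lincomb lam S c" "y = lincomb lam S d" using assms by (metis rspanE)
  then show ?thesis using lincomb_add[of lam S c d] by (intro rspanI) simp
qed

lemma rspan_diff: fixes lam :: "'v \<Rightarrow> nat \<Rightarrow> 'r::comm_ring_1"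
  assumes "x \<in> rspan lam S" "y \<in> rspan lam S" shows "(\<lambda>k. x k - y k) \<in> rspan lam S"
proof -
  obtain c d where "x = lincomb lam S c" "y = lincomb lam S d" using assms by (metis rspanE)
  then show ?thesis using lincomb_diff[of lam S c d] by (intro rspanI) simp
qed

lemma rspan_zero: fixes lam :: "'v \<Rightarrow> nat \<Rightarrow> 'r::comm_ring_1"
  shows "(\<lambda>k. 0) \<in> rspan lam S"
  by (rule rspanI, rule lincomb_zero)

lemma rspan_vecs: fixes lam :: "'v \<Rightarrow> nat \<Rightarrow> 'r::comm_ring_1" shows "(\<And>u. u \<in> S \<Longrightarrow> lam u \<in> vecs N) \<Longrightarrow> rspan lam S \<subseteq> vecs N"
  unfolding rspan_def by auto

lemma rspan_mono:
  fixes lam :: "'v \<Rightarrow> nat \<Rightarrow> 'r::comm_ring_1"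
  assumes "finite S'" "S \<subseteq> S'"
  shows "rspan lam S \<subseteq> rspan lam S'"
proof
  fix x assume "x \<in> rspan lam S"
  then obtain c where x: "x = lincomb lam S c" unfolding rspan_def by auto
  have e: "(if u \<in> S then c u else 0) * z = (if u \<in> S then c u * z else 0)" for u and z :: 'r by simp
  have "lincomb lam S' (\<lambda>u. if u \<in> S then c u else 0) = lincomb lam S c"
  proof
    fix k show "lincomb lam S' (\<lambda>u. if u \<in> S then c u else 0) k = lincomb lam S c k"
      unfolding lincomb_def e using sum.inter_restrict[OF assms(1), of "\<lambda>u. c u * lam u k" S] assms(2)
      by (simp add: Int_absorb1)
  qed
  then show "x \<in> rspan lam S'" using x by (intro rspanI) simp
qed

lemma rspan_reindex: fixes lam :: "'v \<Rightarrow> nat \<Rightarrow> 'r::comm_ring_1" shows "inj_on g S \<Longrightarrow> rspan lam (g ` S) = rspan (\<lambda>u. lam (g u)) S"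
proof (intro equalityI subsetI)
  fix x assume g: "inj_on g S" and "x \<in> rspan lam (g ` S)"
  then show "x \<in> rspan (\<lambda>u. lam (g u)) S" unfolding rspan_def using lincomb_reindex[OF g] by auto
next
  fix x assume g: "inj_on g S" and "x \<in> rspan (\<lambda>u. lam (g u)) S"
  then obtain c where c: "x = lincomb (\<lambda>u. lam (g u)) S c" unfolding rspan_def by auto
  have "lincomb (\<lambda>u. lam (g u)) S c = lincomb (\<lambda>u. lam (g u)) S (\<lambda>u. c (inv_into S g (g u)))"
    by (rule lincomb_cong) (use g in auto)
  also have "\<dots> = lincomb lam (g ` S) (\<lambda>v. c (inv_into S g v))"
    using lincomb_reindex[OF g, of lam "\<lambda>v. c (inv_into S g v)"] by simp
  finally show "x \<in> rspan lam (g ` S)" using c unfolding rspan_def by auto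
qed

lemma rspan_union:
  fixes lam :: "'v \<Rightarrow> nat \<Rightarrow> 'r::comm_ring_1"
  assumes "finite A" "finite B" "A \<inter> B = {}"
  shows "x \<in> rspan lam (A \<union> B) \<longleftrightarrow> (\<exists>y\<in>rspan lam A. \<exists>z\<in>rspan lam B. x = (\<lambda>k. y k + z k))"
proof
  assume "x \<in> rspan lam (A \<union> B)"
  then obtain c where "x = lincomb lam (A \<union> B) c" unfolding rspan_def by auto
  then show "\<exists>y\<in>rspan lam A. \<exists>z\<in>rspan lam B. x = (\<lambda>k. y k + z k)"
    using lincomb_union[OF assms] unfolding rspan_def by blast
next
  assume "\<exists>y\<in>rspan lam A. \<exists>z\<in>rspan lam B. x = (\<lambda>k. y k + z k)"
  then obtain c d where x: "x = (\<lambda>k. lincomb lam A c k + lincomb lam B d k)" unfolding rspan_def by auto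
  define e where "e u = (if u \<in> A then c u else d u)" for u
  have "lincomb lam (A \<union> B) e = (\<lambda>k. lincomb lam A e k + lincomb lam B e k)"
    by (rule lincomb_union[OF assms])
  also have "lincomb lam A e = lincomb lam A c" by (rule lincomb_cong) (auto simp: e_def)
  also have "lincomb lam B e = lincomb lam B d" by (rule lincomb_cong) (use assms(3) in \<open>auto simp: e_def\<close>)
  finally show "x \<in> rspan lam (A \<union> B)" using x by (intro rspanI) simp
qed

definition okproj :: "nat \<Rightarrow> nat \<Rightarrow> ('v \<Rightarrow> nat \<Rightarrow> 'r::comm_ring_1) \<Rightarrow> 'v set
    \<Rightarrow> ((nat \<Rightarrow> 'r) \<Rightarrow> (nat \<Rightarrow> 'r)) \<Rightarrow> bool" where
  "okproj N n' lam S f \<longleftrightarrow> islin N n' f \<and> (\<forall>y\<in>vecs n'. \<exists>x\<in>vecs N. f x = y) \<and>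
     rspan lam S \<subseteq> vecs N \<and> (\<forall>x\<in>vecs N. f x = (\<lambda>k. 0) \<longleftrightarrow> x \<in> rspan lam S)"

lemma projK_iff:
  fixes lam :: "'v \<Rightarrow> nat \<Rightarrow> 'r::comm_ring_1"
  assumes lv: "\<forall>i\<in>{1..m}. lam (iota i) \<in> vecs N"
  shows "mu \<in> projK n m N lam S iota \<longleftrightarrow> (\<forall>i. i \<notin> {1..m} \<longrightarrow> mu i = (\<lambda>k. 0)) \<and>
     (\<exists>f. okproj N n lam S f \<and> (\<forall>i\<in>{1..m}. mu i = f (lam (iota i))))"
proof
  assume "mu \<in> projK n m N lam S iota"
  then obtain \<phi> where mu: "\<forall>i. i \<notin> {1..m} \<longrightarrow> mu i = (\<lambda>k. 0)"
    and ph: "mv n N \<phi> ` vecs N = vecs n" "{x \<in> vecs N. mv n N \<phi> x = (\<lambda>k. 0)} = rspan lam S"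
       "\<forall>i\<in>{1..m}. mu i = mv n N \<phi> (lam (iota i))"
    unfolding projK_def by blast
  have "okproj N n lam S (mv n N \<phi>)"
    unfolding okproj_def
  proof (intro conjI)
    show "islin N n (mv n N \<phi>)" by (rule islin_mv)
    show "\<forall>y\<in>vecs n. \<exists>x\<in>vecs N. mv n N \<phi> x = y" using ph(1) by (metis imageE)
    show "rspan lam S \<subseteq> vecs N" using ph(2) by blast
    show "\<forall>x\<in>vecs N. (mv n N \<phi> x = (\<lambda>k. 0)) = (x \<in> rspan lam S)" using ph(2) by blast
  qed
  then show "(\<forall>i. i \<notin> {1..m} \<longrightarrow> mu i = (\<lambda>k. 0)) \<and>
     (\<exists>f. okproj N n lam S f \<and> (\<forall>i\<in>{1..m}. mu i = f (lam (iota i))))" using mu ph(3) by blast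
next
  assume "(\<forall>i. i \<notin> {1..m} \<longrightarrow> mu i = (\<lambda>k. 0)) \<and>
     (\<exists>f. okproj N n lam S f \<and> (\<forall>i\<in>{1..m}. mu i = f (lam (iota i))))"
  then obtain f where mu: "\<forall>i. i \<notin> {1..m} \<longrightarrow> mu i = (\<lambda>k. 0)" and f: "okproj N n lam S f"
    and mui: "\<forall>i\<in>{1..m}. mu i = f (lam (iota i))" by blast
  obtain M where M: "\<forall>x\<in>vecs N. mv n N M x = f x" using islin_matrix f unfolding okproj_def by blast
  have "mv n N M ` vecs N = vecs n"
  proof (intro equalityI subsetI)
    fix y assume "y \<in> mv n N M ` vecs N" then show "y \<in> vecs n" using mv_vecs by blast
  next
    fix y :: "nat \<Rightarrow> 'r" assume "y \<in> vecs n" then show "y \<in> mv n N M ` vecs N"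
      using f M unfolding okproj_def by (metis image_eqI)
  qed
  moreover have "{x \<in> vecs N. mv n N M x = (\<lambda>k. 0)} = rspan lam S"
    using f M unfolding okproj_def by auto
  moreover have "\<forall>i\<in>{1..m}. mu i = mv n N M (lam (iota i))" using mui M lv by auto
  ultimately show "mu \<in> projK n m N lam S iota" unfolding projK_def using mu by blast
qed

lemma section_exists:
  fixes f :: "(nat \<Rightarrow> 'r::comm_ring_1) \<Rightarrow> (nat \<Rightarrow> 'r)"
  assumes f: "islin N N' f" and surj: "\<forall>y\<in>vecs N'. \<exists>x\<in>vecs N. f x = y"
  shows "\<exists>s. islin N' N s \<and> (\<forall>y\<in>vecs N'. f (s y) = y)"
proof -
  define pre where "pre j = (SOME x. x \<in> vecs N \<and> f x = unitv j)" for j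
  have pre: "pre j \<in> vecs N \<and> f (pre j) = unitv j" if "j < N'" for j
  proof -
    have "\<exists>x. x \<in> vecs N \<and> f x = unitv j" using surj vecs_unitv[OF that] by blast
    then show ?thesis unfolding pre_def by (rule someI_ex)
  qed
  define s where "s y = (\<lambda>k. \<Sum>j\<in>{..<N'}. y j * pre j k)" for y
  have "islin N' N s" unfolding islin_def
  proof (intro conjI ballI allI)
    fix y :: "nat \<Rightarrow> 'r" show "s y \<in> vecs N" unfolding s_def using pre by auto
  next
    fix x y :: "nat \<Rightarrow> 'r" show "s (\<lambda>k. x k + y k) = (\<lambda>k. s x k + s y k)"
      unfolding s_def by (auto simp: distrib_right sum.distrib)
  next
    fix c :: 'r and x :: "nat \<Rightarrow> 'r" show "s (\<lambda>k. c * x k) = (\<lambda>k. c * s x k)"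
      unfolding s_def by (auto simp: sum_distrib_left ac_simps)
  qed
  moreover have "f (s y) = y" if y: "y \<in> vecs N'" for y
  proof -
    have "f (s y) = (\<lambda>k. \<Sum>j\<in>{..<N'}. y j * f (pre j) k)"
      unfolding s_def by (rule islin_sum[OF f]) (use pre in auto)
    also have "\<dots> = (\<lambda>k. \<Sum>j<N'. y j * unitv j k)" using pre by auto
    also have "\<dots> = y" using vec_decomp[OF y] by simp
    finally show ?thesis .
  qed
  ultimately show ?thesis by blast
qed


lemma vdiff_zero_iff: "((\<lambda>k. a k - b k) = (\<lambda>k. 0::'r::comm_ring_1)) \<longleftrightarrow> a = b"
  by (auto simp: fun_eq_iff)

lemma vdiff_add: "(\<lambda>k. (y k - z k) + z k) = (y :: nat \<Rightarrow> 'r::comm_ring_1)"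
  by auto

lemma okproj_ker: "okproj N n' lam S f \<Longrightarrow> x \<in> vecs N \<Longrightarrow> f x = (\<lambda>k. 0) \<longleftrightarrow> x \<in> rspan lam S"
  unfolding okproj_def by blast

lemma projK_comp:
  fixes Lam :: "'v \<Rightarrow> nat \<Rightarrow> 'r::comm_ring_1" and mu0 :: "'w \<Rightarrow> nat \<Rightarrow> 'r"
  assumes M: "okproj N N' Lam \<tau> Mf"
    and f\<tau>: "finite \<tau>" and f\<sigma>: "finite \<sigma>'" and g: "inj_on g \<sigma>'" and disj: "\<tau> \<inter> g ` \<sigma>' = {}"
    and Lv: "\<forall>u\<in>\<tau> \<union> g ` \<sigma>'. Lam u \<in> vecs N" and Li: "\<forall>i\<in>{1..m}. Lam (g (\<iota>1 i)) \<in> vecs N"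
    and mu0: "\<forall>v\<in>\<sigma>'. mu0 v = Mf (Lam (g v))" and mui: "\<forall>i\<in>{1..m}. mu0 (\<iota>1 i) = Mf (Lam (g (\<iota>1 i)))"
  shows "projK n m N' mu0 \<sigma>' \<iota>1 = projK n m N Lam (\<tau> \<union> g ` \<sigma>') (\<lambda>i. g (\<iota>1 i))"
proof -
  have Ml: "islin N N' Mf" and Ms: "\<forall>y\<in>vecs N'. \<exists>x\<in>vecs N. Mf x = y"
    and Mk: "\<And>x. x \<in> vecs N \<Longrightarrow> Mf x = (\<lambda>k. 0) \<longleftrightarrow> x \<in> rspan Lam \<tau>"
    using M unfolding okproj_def by blast+
  have fg: "finite (g ` \<sigma>')" using f\<sigma> by simp
  have sp\<tau>: "rspan Lam \<tau> \<subseteq> vecs N" and spg: "rspan Lam (g ` \<sigma>') \<subseteq> vecs N"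
    and spu: "rspan Lam (\<tau> \<union> g ` \<sigma>') \<subseteq> vecs N"
    using Lv by (auto intro!: rspan_vecs)
  have K1: "y \<in> rspan mu0 \<sigma>' \<longleftrightarrow> (\<exists>z\<in>rspan Lam (g ` \<sigma>'). y = Mf z)" for y
  proof -
    have "rspan mu0 \<sigma>' = rspan (\<lambda>v. Mf (Lam (g v))) \<sigma>'"
      unfolding rspan_def using lincomb_cong_lam[of \<sigma>' mu0 "\<lambda>v. Mf (Lam (g v))"] mu0 by auto
    moreover have "lincomb (\<lambda>v. Mf (Lam (g v))) \<sigma>' c = Mf (lincomb (\<lambda>v. Lam (g v)) \<sigma>' c)" for c
      by (rule lincomb_lin[OF Ml f\<sigma>]) (use Lv in auto)
    ultimately have "rspan mu0 \<sigma>' = Mf ` rspan (\<lambda>v. Lam (g v)) \<sigma>'"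
      unfolding rspan_def by auto
    then show ?thesis using rspan_reindex[OF g, of Lam] by auto
  qed
  have uni: "x \<in> rspan Lam (\<tau> \<union> g ` \<sigma>') \<longleftrightarrow> (\<exists>y\<in>rspan Lam \<tau>. \<exists>z\<in>rspan Lam (g ` \<sigma>'). x = (\<lambda>k. y k + z k))" for x
    by (rule rspan_union[OF f\<tau> fg disj])
  have m0v: "\<forall>i\<in>{1..m}. mu0 (\<iota>1 i) \<in> vecs N'" using mui Li islin_vecs[OF Ml] by auto
  have L1: "(\<exists>\<chi>. okproj N' n mu0 \<sigma>' \<chi> \<and> (\<forall>i\<in>{1..m}. mu i = \<chi> (mu0 (\<iota>1 i)))) \<longleftrightarrow>
     (\<exists>\<phi>. okproj N n Lam (\<tau> \<union> g ` \<sigma>') \<phi> \<and> (\<forall>i\<in>{1..m}. mu i = \<phi> (Lam (g (\<iota>1 i)))))" for mu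
  proof
    assume "\<exists>\<chi>. okproj N' n mu0 \<sigma>' \<chi> \<and> (\<forall>i\<in>{1..m}. mu i = \<chi> (mu0 (\<iota>1 i)))"
    then obtain \<chi> where ch: "okproj N' n mu0 \<sigma>' \<chi>" and mi: "\<forall>i\<in>{1..m}. mu i = \<chi> (mu0 (\<iota>1 i))" by blast
    have cl: "islin N' n \<chi>" and cs: "\<forall>y\<in>vecs n. \<exists>x\<in>vecs N'. \<chi> x = y"
      using ch unfolding okproj_def by blast+
    have "okproj N n Lam (\<tau> \<union> g ` \<sigma>') (\<lambda>x. \<chi> (Mf x))"
      unfolding okproj_def
    proof (intro conjI ballI)
      show "islin N n (\<lambda>x. \<chi> (Mf x))" by (rule islin_comp[OF Ml cl])
      show "rspan Lam (\<tau> \<union> g ` \<sigma>') \<subseteq> vecs N" by (rule spu)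
    next
      fix y :: "nat \<Rightarrow> 'r" assume "y \<in> vecs n"
      then obtain x' where "x' \<in> vecs N'" "\<chi> x' = y" using cs by blast
      then obtain x where "x \<in> vecs N" "Mf x = x'" using Ms by blast
      then show "\<exists>x\<in>vecs N. \<chi> (Mf x) = y" using \<open>\<chi> x' = y\<close> by blast
    next
      fix x :: "nat \<Rightarrow> 'r" assume x: "x \<in> vecs N"
      have Mx: "Mf x \<in> vecs N'" using islin_vecs[OF Ml x] .
      show "(\<chi> (Mf x) = (\<lambda>k. 0)) = (x \<in> rspan Lam (\<tau> \<union> g ` \<sigma>'))"
      proof
        assume "\<chi> (Mf x) = (\<lambda>k. 0)"
        then have "Mf x \<in> rspan mu0 \<sigma>'" using okproj_ker[OF ch Mx] by simp
        then obtain z where z: "z \<in> rspan Lam (g ` \<sigma>')" "Mf x = Mf z" using K1 by blast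
        have zv: "z \<in> vecs N" using z spg by auto
        have "Mf (\<lambda>k. x k - z k) = (\<lambda>k. 0)" using islin_diff[OF Ml x zv] z(2) by simp
        then have "(\<lambda>k. x k - z k) \<in> rspan Lam \<tau>" using Mk[of "\<lambda>k. x k - z k"] x zv by auto
        then show "x \<in> rspan Lam (\<tau> \<union> g ` \<sigma>')" using uni z(1) vdiff_add[of x z] by metis
      next
        assume "x \<in> rspan Lam (\<tau> \<union> g ` \<sigma>')"
        then obtain y z where yz: "y \<in> rspan Lam \<tau>" "z \<in> rspan Lam (g ` \<sigma>')" "x = (\<lambda>k. y k + z k)"
          using uni by blast
        have yv: "y \<in> vecs N" and zv: "z \<in> vecs N" using yz sp\<tau> spg by auto
        have "Mf y = (\<lambda>k. 0)" using Mk[OF yv] yz(1) by simp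
        then have "Mf x = Mf z" using islin_add[OF Ml yv zv] yz(3) by simp
        then have "Mf x \<in> rspan mu0 \<sigma>'" using K1 yz(2) by blast
        then show "\<chi> (Mf x) = (\<lambda>k. 0)" using okproj_ker[OF ch Mx] by simp
      qed
    qed
    moreover have "\<forall>i\<in>{1..m}. mu i = \<chi> (Mf (Lam (g (\<iota>1 i))))" using mi mui by simp
    ultimately show "\<exists>\<phi>. okproj N n Lam (\<tau> \<union> g ` \<sigma>') \<phi> \<and> (\<forall>i\<in>{1..m}. mu i = \<phi> (Lam (g (\<iota>1 i))))"
      by blast
  next
    assume "\<exists>\<phi>. okproj N n Lam (\<tau> \<union> g ` \<sigma>') \<phi> \<and> (\<forall>i\<in>{1..m}. mu i = \<phi> (Lam (g (\<iota>1 i))))"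
    then obtain \<phi> where ph: "okproj N n Lam (\<tau> \<union> g ` \<sigma>') \<phi>" and mi: "\<forall>i\<in>{1..m}. mu i = \<phi> (Lam (g (\<iota>1 i)))"
      by blast
    have pl: "islin N n \<phi>" and ps: "\<forall>y\<in>vecs n. \<exists>x\<in>vecs N. \<phi> x = y"
      using ph unfolding okproj_def by blast+
    obtain s where sl: "islin N' N s" and sr: "\<forall>y\<in>vecs N'. Mf (s y) = y"
      using section_exists[OF Ml Ms] by blast
    have sub: "rspan Lam \<tau> \<subseteq> rspan Lam (\<tau> \<union> g ` \<sigma>')" by (rule rspan_mono) (use f\<tau> fg in auto)
    have KI: "\<phi> (s (Mf x)) = \<phi> x" if x: "x \<in> vecs N" for x
    proof -
      have Mx: "Mf x \<in> vecs N'" using islin_vecs[OF Ml x] .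
      have smx: "s (Mf x) \<in> vecs N" using islin_vecs[OF sl Mx] .
      have "Mf (\<lambda>k. s (Mf x) k - x k) = (\<lambda>k. 0)" using islin_diff[OF Ml smx x] sr Mx by simp
      then have "(\<lambda>k. s (Mf x) k - x k) \<in> rspan Lam \<tau>" using Mk[OF vecs_diff[OF smx x]] by simp
      then have "(\<lambda>k. s (Mf x) k - x k) \<in> rspan Lam (\<tau> \<union> g ` \<sigma>')" using sub by (rule rev_subsetD)
      then have "\<phi> (\<lambda>k. s (Mf x) k - x k) = (\<lambda>k. 0)" using okproj_ker[OF ph vecs_diff[OF smx x]] by simp
      then have "(\<lambda>k. \<phi> (s (Mf x)) k - \<phi> x k) = (\<lambda>k. 0)" using islin_diff[OF pl smx x] by simp
      then show ?thesis by (simp only: vdiff_zero_iff)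
    qed
    have "okproj N' n mu0 \<sigma>' (\<lambda>y. \<phi> (s y))"
      unfolding okproj_def
    proof (intro conjI ballI)
      show "islin N' n (\<lambda>y. \<phi> (s y))" by (rule islin_comp[OF sl pl])
      show "rspan mu0 \<sigma>' \<subseteq> vecs N'"
      proof
        fix y assume "y \<in> rspan mu0 \<sigma>'"
        then obtain z where "z \<in> rspan Lam (g ` \<sigma>')" "y = Mf z" using K1 by blast
        then show "y \<in> vecs N'" using spg islin_vecs[OF Ml] by auto
      qed
    next
      fix y :: "nat \<Rightarrow> 'r" assume "y \<in> vecs n"
      then obtain x where x: "x \<in> vecs N" "\<phi> x = y" using ps by auto
      show "\<exists>x\<in>vecs N'. \<phi> (s x) = y"
        by (rule bexI[of _ "Mf x"]) (use KI[OF x(1)] x(2) islin_vecs[OF Ml x(1)] in auto)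
    next
      fix y :: "nat \<Rightarrow> 'r" assume y: "y \<in> vecs N'"
      have sy: "s y \<in> vecs N" using islin_vecs[OF sl y] .
      show "(\<phi> (s y) = (\<lambda>k. 0)) = (y \<in> rspan mu0 \<sigma>')"
      proof
        assume "\<phi> (s y) = (\<lambda>k. 0)"
        then have "s y \<in> rspan Lam (\<tau> \<union> g ` \<sigma>')" using okproj_ker[OF ph sy] by simp
        then obtain a b where ab: "a \<in> rspan Lam \<tau>" "b \<in> rspan Lam (g ` \<sigma>')" "s y = (\<lambda>k. a k + b k)"
          using uni by blast
        have av: "a \<in> vecs N" and bv: "b \<in> vecs N" using ab sp\<tau> spg by auto
        have "Mf a = (\<lambda>k. 0)" using Mk[OF av] ab(1) by simp
        then have "Mf (s y) = Mf b" using islin_add[OF Ml av bv] ab(3) by simp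
        then have "y = Mf b" using sr y by simp
        then show "y \<in> rspan mu0 \<sigma>'" using K1 ab(2) by blast
      next
        assume "y \<in> rspan mu0 \<sigma>'"
        then obtain b where b: "b \<in> rspan Lam (g ` \<sigma>')" "y = Mf b" using K1 by blast
        have bv: "b \<in> vecs N" using b spg by auto
        have "Mf (\<lambda>k. s y k - b k) = (\<lambda>k. 0)" using islin_diff[OF Ml sy bv] sr y b(2) by simp
        then have "(\<lambda>k. s y k - b k) \<in> rspan Lam \<tau>" using Mk[OF vecs_diff[OF sy bv]] by simp
        then have "\<exists>a\<in>rspan Lam \<tau>. \<exists>z\<in>rspan Lam (g ` \<sigma>'). s y = (\<lambda>k. a k + z k)"
          using b(1) by (intro bexI[of _ "\<lambda>k. s y k - b k"] bexI[of _ b]) auto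
        then have "s y \<in> rspan Lam (\<tau> \<union> g ` \<sigma>')" by (simp only: uni)
        then show "\<phi> (s y) = (\<lambda>k. 0)" using okproj_ker[OF ph sy] by simp
      qed
    qed
    moreover have "\<forall>i\<in>{1..m}. mu i = \<phi> (s (mu0 (\<iota>1 i)))" using mi mui KI Li by simp
    ultimately show "\<exists>\<chi>. okproj N' n mu0 \<sigma>' \<chi> \<and> (\<forall>i\<in>{1..m}. mu i = \<chi> (mu0 (\<iota>1 i)))" by blast
  qed
  have e1: "mu \<in> projK n m N' mu0 \<sigma>' \<iota>1 \<longleftrightarrow> (\<forall>i. i \<notin> {1..m} \<longrightarrow> mu i = (\<lambda>k. 0)) \<and>
     (\<exists>f. okproj N' n mu0 \<sigma>' f \<and> (\<forall>i\<in>{1..m}. mu i = f (mu0 (\<iota>1 i))))" for mu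
    by (rule projK_iff) (use m0v in simp)
  have e2: "mu \<in> projK n m N Lam (\<tau> \<union> g ` \<sigma>') (\<lambda>i. g (\<iota>1 i)) \<longleftrightarrow> (\<forall>i. i \<notin> {1..m} \<longrightarrow> mu i = (\<lambda>k. 0)) \<and>
     (\<exists>f. okproj N n Lam (\<tau> \<union> g ` \<sigma>') f \<and> (\<forall>i\<in>{1..m}. mu i = f (Lam (g (\<iota>1 i)))))" for mu
    by (rule projK_iff) (use Li in simp)
  show ?thesis
    by (rule set_eqI) (simp only: e1 e2 L1)
qed


lemma ssphere_facts:
  assumes "star_shaped_sphere n m K"
  shows "K \<subseteq> Pow {1..m}" "{} \<in> K" "\<And>\<sigma> \<tau>. \<sigma> \<in> K \<Longrightarrow> \<tau> \<subseteq> \<sigma> \<Longrightarrow> \<tau> \<in> K"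
    "\<And>i. i \<in> {1..m} \<Longrightarrow> {i} \<in> K" "\<And>\<sigma>. \<sigma> \<in> K \<Longrightarrow> card \<sigma> \<le> n" "\<exists>\<sigma>\<in>K. card \<sigma> = n"
proof -
  have sc: "simplicial_complex_on m K"
    using assms unfolding star_shaped_sphere_def by (elim conjE) assumption
  have c: "\<forall>\<sigma>\<in>K. card \<sigma> \<le> n"
    using assms unfolding star_shaped_sphere_def by (elim conjE) assumption
  show "\<exists>\<sigma>\<in>K. card \<sigma> = n"
    using assms unfolding star_shaped_sphere_def by (elim conjE) assumption
  show "K \<subseteq> Pow {1..m}" using sc unfolding simplicial_complex_on_def by (elim conjE) assumption
  show "{} \<in> K" using sc unfolding simplicial_complex_on_def by (elim conjE) assumption
  show "\<And>\<sigma> \<tau>. \<sigma> \<in> K \<Longrightarrow> \<tau> \<subseteq> \<sigma> \<Longrightarrow> \<tau> \<in> K" using sc unfolding simplicial_complex_on_def by blast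
  show "\<And>i. i \<in> {1..m} \<Longrightarrow> {i} \<in> K" using sc unfolding simplicial_complex_on_def by blast
  show "\<And>\<sigma>. \<sigma> \<in> K \<Longrightarrow> card \<sigma> \<le> n" using c by blast
qed

lemma VJ_finite: "finite (VJ m J)"
proof -
  have mx: "J a \<le> Max (J ` {1..m})" if "a \<in> {1..m}" for a by (rule Max_ge) (use that in auto)
  have "VJ m J \<subseteq> {1..m} \<times> {1..Max (J ` {1..m})}"
  proof
    fix x assume "x \<in> VJ m J"
    then obtain a b where x: "x = (a, b)" "a \<in> {1..m}" "1 \<le> b" "b \<le> J a" unfolding VJ_def by auto
    then have "J a \<le> Max (J ` {1..m})" using mx[of a] by simp
    then have "b \<le> Max (J ` {1..m})" using x(4) by linarith
    then show "x \<in> {1..m} \<times> {1..Max (J ` {1..m})}" using x by auto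
  qed
  then show ?thesis by (rule finite_subset) auto
qed

definition Tset :: "nat \<Rightarrow> (nat \<Rightarrow> nat) \<Rightarrow> (nat \<times> nat) set" where
  "Tset m J = sigmaJ m J one_idx"

lemma Tset_eq: "Tset m J = {(i, c). i \<in> {1..m} \<and> 2 \<le> c \<and> c \<le> J i}"
  unfolding Tset_def sigmaJ_def VJ_def one_idx_def by auto

lemma Tset_sigma: "Tset m J = Sigma {1..m} (\<lambda>i. {2..J i})"
  unfolding Tset_eq by auto

lemma card_Tset: "card (Tset m J) = (\<Sum>i\<in>{1..m}. J i - 1)"
  unfolding Tset_sigma by (simp add: card_SigmaI)

lemma Tset_finite: "finite (Tset m J)"
  unfolding Tset_sigma by auto

lemma Tset_VJ: "Tset m J \<subseteq> VJ m J"
  unfolding Tset_eq VJ_def by auto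

definition BF :: "nat \<Rightarrow> (nat \<Rightarrow> nat) \<Rightarrow> nat set \<Rightarrow> (nat \<times> nat) set" where
  "BF m J F = Tset m J \<union> (\<lambda>i. (i, 1)) ` F"

lemma BF_disj: "Tset m J \<inter> (\<lambda>i. (i, 1)) ` F = {}"
  unfolding Tset_eq by auto

lemma minimal_nonface_card:
  assumes K: "star_shaped_sphere n m K" and t: "minimal_nonface m K \<tau>"
  shows "\<tau> \<noteq> {}" "\<tau> \<subseteq> {1..m}" "\<tau> \<notin> K"
  using t ssphere_facts[OF K] unfolding minimal_nonface_def by auto

lemma BF_KJ:
  assumes K: "star_shaped_sphere n m K" and J: "\<forall>i\<in>{1..m}. 1 \<le> J i" and F: "F \<in> K"
  shows "BF m J F \<in> KJ m K J"
proof -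
  have Fm: "F \<subseteq> {1..m}" using ssphere_facts(1)[OF K] F by auto
  have "BF m J F \<subseteq> VJ m J" unfolding BF_def using Tset_VJ Fm J by (auto simp: VJ_def)
  moreover have "\<not> (\<Union>i\<in>\<tau>. {(i, k) | k. 1 \<le> k \<and> k \<le> J i}) \<subseteq> BF m J F" if t: "minimal_nonface m K \<tau>" for \<tau>
  proof
    assume sub: "(\<Union>i\<in>\<tau>. {(i, k) | k. 1 \<le> k \<and> k \<le> J i}) \<subseteq> BF m J F"
    have "\<tau> \<subseteq> F"
    proof
      fix i assume i: "i \<in> \<tau>"
      then have "i \<in> {1..m}" using minimal_nonface_card(2)[OF K t] by auto
      then have "(i, 1) \<in> BF m J F" using sub i J by auto
      then show "i \<in> F" unfolding BF_def Tset_eq by auto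
    qed
    then have "\<tau> \<in> K" using ssphere_facts(3)[OF K F] by auto
    then show False using minimal_nonface_card(3)[OF K t] by simp
  qed
  ultimately show ?thesis unfolding KJ_def by auto
qed

lemma card_BF:
  assumes K: "star_shaped_sphere n m K" and F: "F \<in> K" "card F = n"
  shows "card (BF m J F) = NJ n m J"
proof -
  have fF: "finite F" using ssphere_facts(1)[OF K] F(1) by (auto intro: finite_subset)
  have "card (BF m J F) = card (Tset m J) + card ((\<lambda>i. (i, 1::nat)) ` F)"
    unfolding BF_def by (rule card_Un_disjoint) (use Tset_finite fF BF_disj in auto)
  also have "card ((\<lambda>i. (i, 1::nat)) ` F) = n" using F(2) by (simp add: card_image inj_on_def)
  finally show ?thesis unfolding NJ_def card_Tset by simp
qed

lemma singleton_KJ: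
  assumes K: "star_shaped_sphere n m K" and J: "\<forall>i\<in>{1..m}. 1 \<le> J i" and u: "u \<in> VJ m J"
  shows "{u} \<in> KJ m K J"
proof -
  have "\<not> (\<Union>i\<in>\<tau>. {(i, k) | k. 1 \<le> k \<and> k \<le> J i}) \<subseteq> {u}" if t: "minimal_nonface m K \<tau>" for \<tau>
  proof
    assume sub: "(\<Union>i\<in>\<tau>. {(i, k) | k. 1 \<le> k \<and> k \<le> J i}) \<subseteq> {u}"
    obtain i where i: "i \<in> \<tau>" using minimal_nonface_card(1)[OF K t] by auto
    have im: "i \<in> {1..m}" using minimal_nonface_card(2)[OF K t] i by auto
    have "(i, 1) \<in> (\<Union>i\<in>\<tau>. {(i, k) | k. 1 \<le> k \<and> k \<le> J i})" using i J im by auto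
    then have "(i, 1) \<in> {u}" using sub by blast
    then have "\<tau> \<subseteq> {i}" using sub J minimal_nonface_card(2)[OF K t] by fastforce
    then have "\<tau> = {i}" using i by auto
    then show False using minimal_nonface_card(3)[OF K t] ssphere_facts(4)[OF K im] by simp
  qed
  then show ?thesis unfolding KJ_def using u by auto
qed

lemma charmap_vecs:
  assumes K: "star_shaped_sphere n m K" and J: "\<forall>i\<in>{1..m}. 1 \<le> J i"
    and c: "charmap N (KJ m K J) Lam" and u: "u \<in> VJ m J"
  shows "Lam u \<in> vecs N"
  using c singleton_KJ[OF K J u] unfolding charmap_def by auto


lemma blk_off_mono: "k \<le> k' \<Longrightarrow> blk_off n J k \<le> blk_off n J k'"
  unfolding blk_off_def by (auto intro!: sum_mono2)

lemma blk_off_Suc: "1 \<le> k \<Longrightarrow> blk_off n J (Suc k) = blk_off n J k + (J k - 1)"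
proof -
  assume k: "1 \<le> k"
  have "{1..<Suc k} = insert k {1..<k}" using k by auto
  then show ?thesis unfolding blk_off_def by simp
qed

lemma blk_off_last: "blk_off n J (Suc m) = NJ n m J"
  unfolding blk_off_def NJ_def by (simp add: atLeastLessThanSuc_atLeastAtMost)

lemma in_row_bounds:
  assumes k: "k \<in> {1..m}" and r: "in_row n J k t r"
  shows "n \<le> r" "r < NJ n m J" "r < blk_off n J (Suc k)" "blk_off n J k \<le> r"
proof -
  have "blk_off n J (Suc k) \<le> blk_off n J (Suc m)" using k by (intro blk_off_mono) auto
  moreover have "n \<le> blk_off n J k" unfolding blk_off_def by simp
  moreover have "blk_off n J (Suc k) = blk_off n J k + (J k - 1)" using k by (intro blk_off_Suc) auto
  ultimately show "n \<le> r" "r < NJ n m J" "r < blk_off n J (Suc k)" "blk_off n J k \<le> r"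
    using r unfolding in_row_def blk_off_last[symmetric] by auto
qed

lemma in_row_unique:
  assumes k: "k \<in> {1..m}" "k' \<in> {1..m}" and r: "in_row n J k t r" "in_row n J k' t' r"
  shows "k = k' \<and> t = t'"
proof -
  have "\<not> k < k'" if k: "k \<in> {1..m}" "k' \<in> {1..m}" and r: "in_row n J k t r" "in_row n J k' t' r"
    for k k' t t'
  proof
    assume "k < k'"
    then have "blk_off n J (Suc k) \<le> blk_off n J k'" by (intro blk_off_mono) auto
    then show False using in_row_bounds(3)[OF k(1) r(1)] in_row_bounds(4)[OF k(2) r(2)] by simp
  qed
  then have "k = k'" using assms by (meson linorder_neqE_nat)
  then show ?thesis using r unfolding in_row_def by auto
qed

lemma in_row_exists_aux:
  "n \<le> r \<Longrightarrow> r < blk_off n J (Suc M) \<Longrightarrow> \<exists>k\<in>{1..M}. \<exists>t. in_row n J k t r"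
proof (induction M)
  case 0
  then show ?case unfolding blk_off_def by simp
next
  case (Suc M)
  show ?case
  proof (cases "r < blk_off n J (Suc M)")
    case True
    then show ?thesis using Suc by fastforce
  next
    case False
    have e: "blk_off n J (Suc (Suc M)) = blk_off n J (Suc M) + (J (Suc M) - 1)" by (rule blk_off_Suc) simp
    have "in_row n J (Suc M) (r - blk_off n J (Suc M) + 1) r"
      unfolding in_row_def using False Suc(3) e by auto
    then show ?thesis by auto
  qed
qed

lemma in_row_exists: "n \<le> r \<Longrightarrow> r < NJ n m J \<Longrightarrow> \<exists>k\<in>{1..m}. \<exists>t. in_row n J k t r"
  using in_row_exists_aux[of n r J m] blk_off_last[of n J m] by simp

lemma THE_row:
  assumes k: "k \<in> {1..m}" and r: "in_row n J k t r"
  shows "(THE (k', t'). k' \<in> {1..m} \<and> in_row n J k' t' r) = (k, t)"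
proof (rule the_equality)
  show "case (k, t) of (k', t') \<Rightarrow> k' \<in> {1..m} \<and> in_row n J k' t' r" using k r by simp
next
  fix x assume "case x of (k', t') \<Rightarrow> k' \<in> {1..m} \<and> in_row n J k' t' r"
  then show "x = (k, t)" using in_row_unique[OF k _ r] by (cases x) auto
qed

lemma blockLambda_top: "r < n \<Longrightarrow> blockLambda n m J a e (i, c) r = (if c = 1 then a i r else 0)"
  unfolding blockLambda_def by simp

lemma blockLambda_row:
  assumes k: "k \<in> {1..m}" and r: "in_row n J k t r"
  shows "blockLambda n m J a e (i, c) r =
    (if k = i then (if c = 1 then - 1 else if c = t + 1 then 1 else 0)
     else (if c = 1 then e k (t + 1) i else 0))"
proof -
  have "\<not> r < n" using in_row_bounds(1)[OF k r] by simp
  moreover have "\<exists>k\<in>{1..m}. \<exists>t. in_row n J k t r" using k r by blast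
  ultimately show ?thesis unfolding blockLambda_def using THE_row[OF k r] by simp
qed

lemma blockLambda_else:
  "\<not> r < n \<Longrightarrow> \<not> (\<exists>k\<in>{1..m}. \<exists>t. in_row n J k t r) \<Longrightarrow> blockLambda n m J a e u r = 0"
  unfolding blockLambda_def by (cases u) simp

definition rowT :: "nat \<Rightarrow> (nat \<Rightarrow> nat) \<Rightarrow> nat \<Rightarrow> nat \<Rightarrow> nat" where
  "rowT n J k b = blk_off n J k + (b - 2)"

lemma rowT_in_row: "2 \<le> b \<Longrightarrow> b \<le> J k \<Longrightarrow> in_row n J k (b - 1) (rowT n J k b)"
  unfolding in_row_def rowT_def by auto


lemma basis_cong:
  "is_basis N lam S \<Longrightarrow> (\<And>u. u \<in> S \<Longrightarrow> lam u = lam' u) \<Longrightarrow> is_basis N lam' S"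
proof -
  assume b: "is_basis N lam S" and e: "\<And>u. u \<in> S \<Longrightarrow> lam u = lam' u"
  have "lincomb lam S = lincomb lam' S" using lincomb_cong_lam[of S lam lam'] e by (auto simp: fun_eq_iff)
  then show ?thesis using b unfolding is_basis_def by simp
qed

lemma basis_reindex:
  fixes lam :: "'v \<Rightarrow> nat \<Rightarrow> 'r::comm_ring_1" and g :: "'u \<Rightarrow> 'v"
  assumes g: "inj_on g S" and B: "is_basis N lam (g ` S)"
  shows "is_basis N (\<lambda>u. lam (g u)) S"
  unfolding is_basis_def bij_betw_def
proof (intro conjI)
  show "inj_on (lincomb (\<lambda>u. lam (g u)) S) {c. \<forall>u. u \<notin> S \<longrightarrow> c u = 0}"
  proof (rule inj_onI)
    fix c c' assume c: "c \<in> {c. \<forall>u. u \<notin> S \<longrightarrow> c u = 0}" and c': "c' \<in> {c. \<forall>u. u \<notin> S \<longrightarrow> c u = 0}"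
      and eq: "lincomb (\<lambda>u. lam (g u)) S c = lincomb (\<lambda>u. lam (g u)) S c'"
    define ct where "ct d v = (if v \<in> g ` S then d (inv_into S g v) else 0)" for d :: "'u \<Rightarrow> 'r" and v
    have l: "lincomb lam (g ` S) (ct d) = lincomb (\<lambda>u. lam (g u)) S d" for d
    proof -
      have "lincomb lam (g ` S) (ct d) = lincomb (\<lambda>u. lam (g u)) S (\<lambda>u. ct d (g u))"
        by (rule lincomb_reindex[OF g])
      also have "\<dots> = lincomb (\<lambda>u. lam (g u)) S d"
        by (rule lincomb_cong) (use g in \<open>auto simp: ct_def\<close>)
      finally show ?thesis .
    qed
    have "ct c = ct c'"
      by (rule basis_uniq[OF B]) (auto simp: ct_def l eq)
    then have "ct c (g u) = ct c' (g u)" for u by simp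
    then have "c u = c' u" if "u \<in> S" for u
    proof -
      have "ct c (g u) = ct c' (g u)" by fact
      moreover have "inv_into S g (g u) = u" using g that by (rule inv_into_f_f)
      ultimately show ?thesis using that by (simp add: ct_def)
    qed
    then show "c = c'" using c c' by (auto simp: fun_eq_iff) (metis)
  qed
next
  show "lincomb (\<lambda>u. lam (g u)) S ` {c. \<forall>u. u \<notin> S \<longrightarrow> c u = 0} = vecs N"
  proof (intro equalityI subsetI)
    fix x assume "x \<in> lincomb (\<lambda>u. lam (g u)) S ` {c. \<forall>u. u \<notin> S \<longrightarrow> c u = 0}"
    then obtain c where x: "x = lincomb (\<lambda>u. lam (g u)) S c" by auto
    define ct where "ct v = (if v \<in> g ` S then c (inv_into S g v) else 0)" for v
    have "lincomb lam (g ` S) ct = lincomb (\<lambda>u. lam (g u)) S (\<lambda>u. ct (g u))"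
      by (rule lincomb_reindex[OF g])
    also have "\<dots> = x" unfolding x
      by (rule lincomb_cong) (use g in \<open>auto simp: ct_def\<close>)
    finally have "x = lincomb lam (g ` S) (\<lambda>v. if v \<in> g ` S then ct v else 0)"
      using lincomb_cong[of "g ` S" ct "\<lambda>v. if v \<in> g ` S then ct v else 0" lam] by simp
    moreover have "lincomb lam (g ` S) (\<lambda>v. if v \<in> g ` S then ct v else 0) \<in> vecs N"
      using B unfolding is_basis_def bij_betw_def by auto
    ultimately show "x \<in> vecs N" by simp
  next
    fix x :: "nat \<Rightarrow> 'r" assume x: "x \<in> vecs N"
    obtain c where c: "\<forall>u. u \<notin> g ` S \<longrightarrow> c u = 0" "lincomb lam (g ` S) c = x" using basis_rep[OF B x] by blast
    have "x = lincomb (\<lambda>u. lam (g u)) S (\<lambda>u. c (g u))" using c(2) lincomb_reindex[OF g, of lam c] by simp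
    also have "\<dots> = lincomb (\<lambda>u. lam (g u)) S (\<lambda>u. if u \<in> S then c (g u) else 0)"
      by (rule lincomb_cong) auto
    finally show "x \<in> lincomb (\<lambda>u. lam (g u)) S ` {c. \<forall>u. u \<notin> S \<longrightarrow> c u = 0}" by auto
  qed
qed


lemma one_IJ: "\<forall>i\<in>{1..m}. 1 \<le> J i \<Longrightarrow> one_idx \<in> IJ m J"
  unfolding IJ_def one_idx_def by auto

lemma h_IJ: "\<forall>i\<in>{1..m}. 1 \<le> J i \<Longrightarrow> k \<in> {1..m} \<Longrightarrow> 1 \<le> b \<Longrightarrow> b \<le> J k \<Longrightarrow> one_idx(k := b) \<in> IJ m J"
  unfolding IJ_def one_idx_def by auto

lemma IJ_VJ: "\<alpha> \<in> IJ m J \<Longrightarrow> i \<in> {1..m} \<Longrightarrow> (i, \<alpha> i) \<in> VJ m J"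
  unfolding IJ_def VJ_def by auto

lemma VJ_mem: "(i, c) \<in> VJ m J \<longleftrightarrow> i \<in> {1..m} \<and> 1 \<le> c \<and> c \<le> J i"
  unfolding VJ_def by simp

lemma sigmaJ_mem: "(i, c) \<in> sigmaJ m J \<alpha> \<longleftrightarrow> (i, c) \<in> VJ m J \<and> c \<noteq> \<alpha> i"
  unfolding sigmaJ_def VJ_def by blast

lemma sigmaJ_VJ: "sigmaJ m J \<alpha> \<subseteq> VJ m J"
  unfolding sigmaJ_def by auto

lemma sigmaJ_finite: "finite (sigmaJ m J \<alpha>)"
  using finite_subset[OF sigmaJ_VJ VJ_finite] .

lemma sigma_h:
  assumes k: "k \<in> {1..m}" and b: "2 \<le> b" "b \<le> J k"
  shows "sigmaJ m J (one_idx(k := b)) = (Tset m J - {(k, b)}) \<union> {(k, 1)}"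
proof (rule set_eqI)
  fix x :: "nat \<times> nat" obtain i c where x: "x = (i, c)" by fastforce
  show "x \<in> sigmaJ m J (one_idx(k := b)) \<longleftrightarrow> x \<in> (Tset m J - {(k, b)}) \<union> {(k, 1)}"
    unfolding x sigmaJ_mem VJ_mem Tset_eq using k b by (auto simp: one_idx_def)
qed

lemma VJ_wed: "k \<in> {1..m} \<Longrightarrow> VJ m (wedJ k) = (\<lambda>i. (i, 1)) ` {1..m} \<union> {(k, 2)}"
proof (rule set_eqI)
  fix x :: "nat \<times> nat" assume k: "k \<in> {1..m}"
  obtain i c where x: "x = (i, c)" by fastforce
  show "x \<in> VJ m (wedJ k) \<longleftrightarrow> x \<in> (\<lambda>i. (i, 1)) ` {1..m} \<union> {(k, 2)}"
    unfolding x VJ_mem using k by (auto simp: wedJ_def)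
qed

lemma sigma_wed1: "k \<in> {1..m} \<Longrightarrow> sigmaJ m (wedJ k) one_idx = {(k, 2)}"
proof (rule set_eqI)
  fix x :: "nat \<times> nat" assume k: "k \<in> {1..m}"
  obtain i c where x: "x = (i, c)" by fastforce
  show "x \<in> sigmaJ m (wedJ k) one_idx \<longleftrightarrow> x \<in> {(k, 2)}"
    unfolding x sigmaJ_mem VJ_mem using k by (auto simp: wedJ_def one_idx_def)
qed

lemma sigma_wed2: "k \<in> {1..m} \<Longrightarrow> sigmaJ m (wedJ k) (one_idx(k := 2)) = {(k, 1)}"
proof (rule set_eqI)
  fix x :: "nat \<times> nat" assume k: "k \<in> {1..m}"
  obtain i c where x: "x = (i, c)" by fastforce
  show "x \<in> sigmaJ m (wedJ k) (one_idx(k := 2)) \<longleftrightarrow> x \<in> {(k, 1)}"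
    unfolding x sigmaJ_mem VJ_mem using k by (auto simp: wedJ_def one_idx_def)
qed

lemma NJ_wed: "k \<in> {1..m} \<Longrightarrow> NJ n m (wedJ k) = n + 1"
proof -
  assume k: "k \<in> {1..m}"
  have "(\<Sum>i\<in>{1..m}. wedJ k i - 1) = (\<Sum>i\<in>{1..m}. if i = k then 1 else 0)"
    by (rule sum.cong) (auto simp: wedJ_def)
  also have "\<dots> = 1" using k by simp
  finally show ?thesis unfolding NJ_def by simp
qed

lemma get_phi:
  fixes Lam :: "nat \<times> nat \<Rightarrow> nat \<Rightarrow> 'r::comm_ring_1"
  assumes J: "\<forall>i\<in>{1..m}. 1 \<le> J i" and re: "realizes n m J Lam p" and a: "a \<in> p one_idx"
    and Lv: "\<And>u. u \<in> VJ m J \<Longrightarrow> Lam u \<in> vecs (NJ n m J)"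
  shows "\<exists>\<phi>. okproj (NJ n m J) n Lam (Tset m J) \<phi> \<and> (\<forall>i\<in>{1..m}. a i = \<phi> (Lam (i, 1))) \<and>
    (\<forall>i. i \<notin> {1..m} \<longrightarrow> a i = (\<lambda>k. 0))"
proof -
  have "a \<in> projJ n m J Lam one_idx" using re a one_IJ[OF J] unfolding realizes_def by auto
  then have a2: "a \<in> projK n m (NJ n m J) Lam (Tset m J) (\<lambda>i. (i, 1))"
    unfolding projJ_def Tset_def one_idx_def by simp
  have lv: "\<forall>i\<in>{1..m}. Lam (i, 1) \<in> vecs (NJ n m J)" using Lv J by (auto simp: VJ_def)
  have "a \<in> projK n m (NJ n m J) Lam (Tset m J) (\<lambda>i. (i, 1)) \<longleftrightarrow>
    (\<forall>i. i \<notin> {1..m} \<longrightarrow> a i = (\<lambda>k. 0)) \<and>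
    (\<exists>f. okproj (NJ n m J) n Lam (Tset m J) f \<and> (\<forall>i\<in>{1..m}. a i = f (Lam (i, 1))))"
    by (rule projK_iff) (use lv in simp)
  with a2 show ?thesis by auto
qed

lemma okproj_vecs: "okproj N n' lam S f \<Longrightarrow> x \<in> vecs N \<Longrightarrow> f x \<in> vecs n'"
  unfolding okproj_def using islin_vecs by blast

lemma a_basis:
  fixes Lam :: "nat \<times> nat \<Rightarrow> nat \<Rightarrow> 'r::comm_ring_1"
  assumes K: "star_shaped_sphere n m K" and J: "\<forall>i\<in>{1..m}. 1 \<le> J i"
    and c: "charmap (NJ n m J) (KJ m K J) Lam"
    and ph: "okproj (NJ n m J) n Lam (Tset m J) \<phi>" and ai: "\<forall>i\<in>{1..m}. a i = \<phi> (Lam (i, 1))"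
    and F: "F \<in> K" "card F = n"
  shows "is_basis n a F"
proof -
  have Fm: "F \<subseteq> {1..m}" using ssphere_facts(1)[OF K] F by auto
  have fF: "finite F" using Fm by (rule finite_subset) simp
  have "is_basis (NJ n m J) Lam (BF m J F)"
    using c BF_KJ[OF K J F(1)] card_BF[OF K F] unfolding charmap_def by auto
  then have "is_basis (NJ n m J) Lam (Tset m J \<union> (\<lambda>i. (i, 1)) ` F)" unfolding BF_def .
  from basis_quot[OF this BF_disj Tset_finite _ _ _ _] ph fF
  have "is_basis n (\<lambda>u. \<phi> (Lam u)) ((\<lambda>i. (i, 1::nat)) ` F)"
    unfolding okproj_def by blast
  from basis_reindex[OF _ this] have "is_basis n (\<lambda>i. \<phi> (Lam (i, 1))) F" by (auto simp: inj_on_def)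
  then show ?thesis by (rule basis_cong) (use ai Fm in auto)
qed



lemma mem_rspan: "finite S \<Longrightarrow> u \<in> S \<Longrightarrow> lam u \<in> rspan lam S"
  by (rule rspanI, rule lincomb_delta)

lemma rspan_single:
  fixes lam :: "'v \<Rightarrow> nat \<Rightarrow> 'r::comm_ring_1"
  shows "x \<in> rspan lam {u} \<longleftrightarrow> (\<exists>c. x = (\<lambda>k. c * lam u k))"
  unfolding rspan_def lincomb_def by auto

definition cval :: "(nat \<Rightarrow> 'r::comm_ring_1) \<Rightarrow> nat \<Rightarrow> nat \<Rightarrow> nat \<times> nat \<Rightarrow> 'r" where
  "cval ev k b u = (case u of (i, c) \<Rightarrow>
     if (i, c) = (k, b) then 1 else if c = 1 then (if i = k then - 1 else ev i) else 0)"

definition phih :: "nat \<Rightarrow> (nat \<Rightarrow> 'r::comm_ring_1) \<Rightarrow> (nat \<Rightarrow> 'r) \<Rightarrow> nat \<Rightarrow> 'r" where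
  "phih n ak x = (\<lambda>r. if r < n then x r + x n * ak r else 0)"

lemma stdform_vecs: "stdform n a v ev u \<in> vecs (n + 1)"
  unfolding stdform_def vecs_def by (cases u) auto

lemma okproj_phih:
  fixes a :: "nat \<Rightarrow> nat \<Rightarrow> 'r::comm_ring_1"
  assumes ak: "a k \<in> vecs n"
  shows "okproj (n + 1) n (stdform n a k ev) {(k, 1)} (phih n (a k))"
  unfolding okproj_def
proof (intro conjI ballI)
  show "islin (n + 1) n (phih n (a k))"
    unfolding islin_def phih_def vecs_def by (auto simp: fun_eq_iff algebra_simps)
next
  fix y :: "nat \<Rightarrow> 'r" assume y: "y \<in> vecs n"
  then have "phih n (a k) y = y" "y \<in> vecs (n + 1)" unfolding phih_def vecs_def by (auto simp: fun_eq_iff)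
  then show "\<exists>x\<in>vecs (n + 1). phih n (a k) x = y" by blast
next
  show "rspan (stdform n a k ev) {(k, 1)} \<subseteq> vecs (n + 1)"
    by (rule rspan_vecs) (rule stdform_vecs)
next
  fix x :: "nat \<Rightarrow> 'r" assume x: "x \<in> vecs (n + 1)"
  have s1: "stdform n a k ev (k, 1) = (\<lambda>r. if r < n then a k r else if r = n then - 1 else 0)"
    unfolding stdform_def by auto
  show "(phih n (a k) x = (\<lambda>k. 0)) = (x \<in> rspan (stdform n a k ev) {(k, 1)})"
    unfolding rspan_single s1
  proof
    assume h: "phih n (a k) x = (\<lambda>k. 0)"
    have "x = (\<lambda>r. (- x n) * (if r < n then a k r else if r = n then - 1 else 0))"
    proof
      fix r show "x r = (- x n) * (if r < n then a k r else if r = n then - 1 else 0)"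
      proof (cases "r < n")
        case True
        then have "x r + x n * a k r = 0" using fun_cong[OF h, of r] unfolding phih_def by simp
        then show ?thesis using True by (simp add: algebra_simps eq_neg_iff_add_eq_0)
      next
        case False
        then show ?thesis using x by (cases "r = n") (auto simp: vecs_def)
      qed
    qed
    then show "\<exists>c. x = (\<lambda>r. c * (if r < n then a k r else if r = n then - 1 else 0))" by blast
  next
    assume "\<exists>c. x = (\<lambda>r. c * (if r < n then a k r else if r = n then - 1 else 0))"
    then obtain c where "x = (\<lambda>r. c * (if r < n then a k r else if r = n then - 1 else 0))" by blast
    then show "phih n (a k) x = (\<lambda>k. 0)" unfolding phih_def by (auto simp: fun_eq_iff)
  qed
qed


lemma islin_sub: "islin N N' f \<Longrightarrow> islin N N' g \<Longrightarrow> islin N N' (\<lambda>x r. f x r - g x r)"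
  unfolding islin_def by (auto simp: fun_eq_iff algebra_simps)

lemma okproj_kill:
  assumes "okproj N n' lam S f" "finite S" "u \<in> S" "lam u \<in> vecs N"
  shows "f (lam u) = (\<lambda>k. 0)"
proof -
  have "lam u \<in> rspan lam S" using mem_rspan[OF assms(2,3)] .
  then show ?thesis using okproj_ker[OF assms(1,4)] by simp
qed

lemma psi2:
  fixes Lam :: "nat \<times> nat \<Rightarrow> nat \<Rightarrow> 'r::comm_ring_1"
  assumes K: "star_shaped_sphere n m K" and J: "\<forall>i\<in>{1..m}. 1 \<le> J i"
    and c: "charmap (NJ n m J) (KJ m K J) Lam" and re: "realizes n m J Lam p"
    and ph: "okproj (NJ n m J) n Lam (Tset m J) \<phi>" and ai: "\<forall>i\<in>{1..m}. a i = \<phi> (Lam (i, 1))"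
    and a0: "\<forall>i. i \<notin> {1..m} \<longrightarrow> a i = (\<lambda>k. 0)"
    and k: "k \<in> {1..m}" and b: "2 \<le> b" "b \<le> J k" and so: "std_ok n m K p a k b ev"
  shows "\<exists>P. islin (NJ n m J) 1 P \<and> (\<forall>u\<in>VJ m J. P (Lam u) 0 = cval ev k b u)"
proof -
  define N where "N = NJ n m J"
  define h where "h = one_idx(k := b)"
  have Lv: "Lam u \<in> vecs N" if "u \<in> VJ m J" for u
    unfolding N_def by (rule charmap_vecs[OF K J c that])
  have av: "a i \<in> vecs n" for i
  proof (cases "i \<in> {1..m}")
    case True
    then have "Lam (i, 1) \<in> vecs N" using J by (intro Lv) (auto simp: VJ_def)
    then show ?thesis using ai True okproj_vecs[OF ph] by (auto simp: N_def)
  qed (use a0 in auto)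
  define g where "g i = (if i \<in> {1..m} then (if i = k then a k else (\<lambda>r. a i r + ev i * a k r)) else (\<lambda>r. 0))" for i
  have g_in: "g \<in> projJ n m (wedJ k) (stdform n a k ev) (one_idx(k := 2))"
  proof -
    have e: "projJ n m (wedJ k) (stdform n a k ev) (one_idx(k := 2)) =
       projK n m (n + 1) (stdform n a k ev) {(k, 1)} (\<lambda>i. (i, (one_idx(k := 2)) i))"
      unfolding projJ_def NJ_wed[OF k] sigma_wed2[OF k] ..
    have iff: "g \<in> projK n m (n + 1) (stdform n a k ev) {(k, 1)} (\<lambda>i. (i, (one_idx(k := 2)) i)) \<longleftrightarrow>
      (\<forall>i. i \<notin> {1..m} \<longrightarrow> g i = (\<lambda>k. 0)) \<and>
      (\<exists>f. okproj (n + 1) n (stdform n a k ev) {(k, 1)} f \<and>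
          (\<forall>i\<in>{1..m}. g i = f (stdform n a k ev (i, (one_idx(k := 2)) i))))"
      by (rule projK_iff) (use stdform_vecs in blast)
    have "g i = phih n (a k) (stdform n a k ev (i, (one_idx(k := 2)) i))" if i: "i \<in> {1..m}" for i
    proof (cases "i = k")
      case True
      then show ?thesis using i av[of k] unfolding g_def phih_def stdform_def one_idx_def
        by (auto simp: fun_eq_iff vecs_def)
    next
      case False
      then show ?thesis using i av[of k] av[of i] unfolding g_def phih_def stdform_def one_idx_def
        by (auto simp: fun_eq_iff vecs_def)
    qed
    moreover have "okproj (n + 1) n (stdform n a k ev) {(k, 1)} (phih n (a k))"
      by (rule okproj_phih) (rule av)
    ultimately show ?thesis unfolding e iff by (auto simp: g_def)
  qed
  have "projJ n m (wedJ k) (stdform n a k ev) (one_idx(k := 2)) = p (one_idx(k := b))"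
    using so unfolding std_ok_def by (elim conjE)
  then have "g \<in> p h" using g_in unfolding h_def by simp
  moreover have "h \<in> IJ m J" unfolding h_def using h_IJ[OF J k, of b] b by simp
  ultimately have "g \<in> projJ n m J Lam h" using re unfolding realizes_def by metis
  then have g2: "g \<in> projK n m N Lam (sigmaJ m J h) (\<lambda>i. (i, h i))" unfolding projJ_def N_def .
  have hv: "\<forall>i\<in>{1..m}. Lam (i, h i) \<in> vecs N" using Lv IJ_VJ[OF \<open>h \<in> IJ m J\<close>] by auto
  have "g \<in> projK n m N Lam (sigmaJ m J h) (\<lambda>i. (i, h i)) \<longleftrightarrow>
      (\<forall>i. i \<notin> {1..m} \<longrightarrow> g i = (\<lambda>k. 0)) \<and>
      (\<exists>f. okproj N n Lam (sigmaJ m J h) f \<and> (\<forall>i\<in>{1..m}. g i = f (Lam (i, h i))))"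
    by (rule projK_iff) (use hv in simp)
  with g2 obtain \<phi>h where phh: "okproj N n Lam (sigmaJ m J h) \<phi>h"
    and gi: "\<forall>i\<in>{1..m}. g i = \<phi>h (Lam (i, h i))" by blast
  obtain F where F: "F \<in> K" "card F = n" "k \<in> F" using purity[OF K k] by blast
  have aB: "is_basis n a F" using a_basis[OF K J c ph ai F(1,2)] .
  have fF: "finite F" using ssphere_facts(1)[OF K] F(1) by (auto intro: finite_subset)
  have "\<exists>f. islin n 1 f \<and> (\<forall>u\<in>F. f (a u) = (if u = k then unitv 0 else (\<lambda>r. 0)))"
    by (rule basis_extend[OF aB fF]) (auto intro: vecs_unitv)
  then obtain L where L: "islin n 1 L" "\<forall>i\<in>F. L (a i) = (if i = k then unitv 0 else (\<lambda>r. 0))"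
    by blast
  have Lak: "L (a k) = unitv 0" using L(2) F(3) by simp
  define D where "D x = (\<lambda>r. \<phi>h x r - \<phi> x r)" for x
  have Dl: "islin N n D" unfolding D_def
    by (rule islin_sub) (use phh ph in \<open>auto simp: okproj_def N_def\<close>)
  have DL: "D (Lam u) = (\<lambda>r. cval ev k b u * a k r)" if u: "u \<in> VJ m J" for u
  proof -
    obtain i c where ic: "u = (i, c)" by fastforce
    have i: "i \<in> {1..m}" "1 \<le> c" "c \<le> J i" using u unfolding ic VJ_mem by auto
    have uv: "Lam (i, c) \<in> vecs N" using Lv u ic by simp
    have fT: "finite (Tset m J)" by (rule Tset_finite)
    have fS: "finite (sigmaJ m J h)" by (rule sigmaJ_finite)
    show ?thesis
    proof (cases "c = 1")
      case c1: True
      show ?thesis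
      proof (cases "i = k")
        case True
        have "(i, c) \<in> sigmaJ m J h" unfolding sigmaJ_mem using u ic True c1 b by (simp add: h_def)
        then have "\<phi>h (Lam (i, c)) = (\<lambda>k. 0)" using okproj_kill[OF phh fS _ uv] by simp
        moreover have "\<phi> (Lam (i, c)) = a k" using ai True c1 i by simp
        ultimately show ?thesis unfolding D_def cval_def ic using True c1 b by (auto simp: fun_eq_iff)
      next
        case False
        have "\<phi>h (Lam (i, c)) = g i" using gi i c1 False by (simp add: h_def one_idx_def)
        moreover have "\<phi> (Lam (i, c)) = a i" using ai c1 i by simp
        ultimately show ?thesis unfolding D_def cval_def ic g_def using False c1 i by (auto simp: fun_eq_iff)
      qed
    next
      case c2: False
      then have inT: "(i, c) \<in> Tset m J" unfolding Tset_eq using i by auto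
      then have p0: "\<phi> (Lam (i, c)) = (\<lambda>k. 0)" using okproj_kill[OF ph[folded N_def] fT _ uv] by simp
      show ?thesis
      proof (cases "(i, c) = (k, b)")
        case True
        have "\<phi>h (Lam (i, c)) = g k" using gi True k by (simp add: h_def)
        then show ?thesis unfolding D_def cval_def ic g_def using True p0 k by (auto simp: fun_eq_iff)
      next
        case False
        have "(i, c) \<in> sigmaJ m J h" unfolding sigmaJ_mem using u ic False c2 by (auto simp: h_def one_idx_def)
        then have "\<phi>h (Lam (i, c)) = (\<lambda>k. 0)" using okproj_kill[OF phh fS _ uv] by simp
        then show ?thesis unfolding D_def cval_def ic using False c2 p0 by (auto simp: fun_eq_iff)
      qed
    qed
  qed
  have "islin N 1 (\<lambda>x. L (D x))" by (rule islin_comp[OF Dl L(1)])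
  moreover have "L (D (Lam u)) 0 = cval ev k b u" if u: "u \<in> VJ m J" for u
  proof -
    have "L (D (Lam u)) = (\<lambda>r. cval ev k b u * L (a k) r)"
      unfolding DL[OF u] by (rule islin_smul[OF L(1) av])
    then show ?thesis unfolding Lak by (simp add: unitv_def)
  qed
  ultimately show ?thesis unfolding N_def by blast
qed


lemma in_row_t: "in_row n J k t r \<Longrightarrow> 2 \<le> t + 1 \<and> t + 1 \<le> J k"
  unfolding in_row_def by auto

lemma rowT_unique:
  assumes "k \<in> {1..m}" "2 \<le> b" "b \<le> J k" "k' \<in> {1..m}" "in_row n J k' t r"
  shows "r = rowT n J k b \<longleftrightarrow> k' = k \<and> t + 1 = b"
proof
  assume r: "r = rowT n J k b"
  have "in_row n J k (b - 1) (rowT n J k b)" using assms(2,3) by (rule rowT_in_row)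
  then have "in_row n J k (b - 1) r" using r by simp
  then have "k = k' \<and> b - 1 = t" using in_row_unique[OF assms(1,4) _ assms(5)] by blast
  then show "k' = k \<and> t + 1 = b" using assms(2) by auto
next
  assume "k' = k \<and> t + 1 = b"
  then show "r = rowT n J k b" using assms(5) unfolding in_row_def rowT_def by auto
qed

lemma rowT_ge: "n \<le> rowT n J k b"
  unfolding rowT_def blk_off_def by simp

lemma blockLambda_T:
  assumes k: "k \<in> {1..m}" and b: "2 \<le> b" "b \<le> J k"
  shows "blockLambda n m J a e (k, b) r = (if r = rowT n J k b then 1 else 0)"
proof (cases "r < n")
  case True
  then show ?thesis using blockLambda_top[OF True, of m J a e k b] rowT_ge[of n J k b] b by auto
next
  case nt: False
  show ?thesis
  proof (cases "\<exists>k\<in>{1..m}. \<exists>t. in_row n J k t r")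
    case True
    then obtain k' t where kt: "k' \<in> {1..m}" "in_row n J k' t r" by blast
    show ?thesis unfolding blockLambda_row[OF kt] using rowT_unique[OF k b kt] b by auto
  next
    case False
    have "in_row n J k (b - 1) (rowT n J k b)" using b by (rule rowT_in_row)
    then have "r \<noteq> rowT n J k b" using False k by blast
    then show ?thesis using blockLambda_else[OF nt False] by simp
  qed
qed

lemma claim2_core:
  fixes Lam :: "nat \<times> nat \<Rightarrow> nat \<Rightarrow> 'r::comm_ring_1" and a :: "nat \<Rightarrow> nat \<Rightarrow> 'r"
  assumes K: "star_shaped_sphere n m K" and J: "\<forall>i\<in>{1..m}. 1 \<le> J i"
    and c: "charmap (NJ n m J) (KJ m K J) Lam" and re: "realizes n m J Lam p"
    and ph: "okproj (NJ n m J) n Lam (Tset m J) \<phi>" and ai: "\<forall>i\<in>{1..m}. a i = \<phi> (Lam (i, 1))"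
    and a0: "\<forall>i. i \<notin> {1..m} \<longrightarrow> a i = (\<lambda>k. 0)"
    and Ps: "\<And>k b. k \<in> {1..m} \<Longrightarrow> 2 \<le> b \<Longrightarrow> b \<le> J k \<Longrightarrow>
       islin (NJ n m J) 1 (Ps k b) \<and> (\<forall>u\<in>VJ m J. Ps k b (Lam u) 0 = cval (e k b) k b u)"
  shows "\<exists>U. okproj (NJ n m J) (NJ n m J) Lam {} U \<and>
     (\<forall>u\<in>VJ m J. U (Lam u) = blockLambda n m J a e u)"
proof -
  define N where "N = NJ n m J"
  have nN: "n \<le> N" unfolding N_def NJ_def by simp
  have Lv: "Lam u \<in> vecs N" if "u \<in> VJ m J" for u
    unfolding N_def by (rule charmap_vecs[OF K J c that])
  have phl: "islin N n \<phi>" using ph unfolding okproj_def N_def by blast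
  define Urow where "Urow r x = (if r < n then \<phi> x r else if \<exists>k\<in>{1..m}. \<exists>t. in_row n J k t r then
      (case THE (k, t). k \<in> {1..m} \<and> in_row n J k t r of (k, t) \<Rightarrow> Ps k (t + 1) x 0) else 0)" for r x
  define U where "U x = (\<lambda>r. Urow r x)" for x
  have Ublk: "U x r = Ps k (t + 1) x 0" if k: "k \<in> {1..m}" and r: "in_row n J k t r" for k t r x
  proof -
    have "\<not> r < n" using in_row_bounds(1)[OF k r] by simp
    then show ?thesis unfolding U_def Urow_def using THE_row[OF k r] k r by auto
  qed
  have Utop: "U x r = \<phi> x r" if "r < n" for r x unfolding U_def Urow_def using that by simp
  have Uelse: "U x r = 0" if "\<not> r < n" "\<not> (\<exists>k\<in>{1..m}. \<exists>t. in_row n J k t r)" for r x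
    unfolding U_def Urow_def using that by simp
  have Ulin: "islin N N U" unfolding islin_def
  proof (intro conjI ballI allI)
    fix x :: "nat \<Rightarrow> 'r" assume x: "x \<in> vecs N"
    show "U x \<in> vecs N" unfolding vecs_iff
    proof (intro allI impI)
      fix r assume "N \<le> r"
      moreover have "\<not> (\<exists>k\<in>{1..m}. \<exists>t. in_row n J k t r)"
        using in_row_bounds(2) \<open>N \<le> r\<close> unfolding N_def by fastforce
      ultimately show "U x r = 0" using Uelse nN by simp
    qed
  next
    fix x y :: "nat \<Rightarrow> 'r" assume x: "x \<in> vecs N" and y: "y \<in> vecs N"
    show "U (\<lambda>k. x k + y k) = (\<lambda>k. U x k + U y k)"
    proof
      fix r show "U (\<lambda>k. x k + y k) r = U x r + U y r"
      proof (cases "r < n")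
        case True then show ?thesis using Utop islin_add[OF phl x y] by simp
      next
        case nt: False
        show ?thesis
        proof (cases "\<exists>k\<in>{1..m}. \<exists>t. in_row n J k t r")
          case True
          then obtain k t where kt: "k \<in> {1..m}" "in_row n J k t r" by blast
          have "islin N 1 (Ps k (t + 1))" using Ps[OF kt(1)] in_row_t[OF kt(2)] unfolding N_def by blast
          then show ?thesis using Ublk[OF kt] islin_add[OF _ x y] by simp
        next
          case False then show ?thesis using nt Uelse by simp
        qed
      qed
    qed
  next
    fix d :: 'r and x :: "nat \<Rightarrow> 'r" assume x: "x \<in> vecs N"
    show "U (\<lambda>k. d * x k) = (\<lambda>k. d * U x k)"
    proof
      fix r show "U (\<lambda>k. d * x k) r = d * U x r"
      proof (cases "r < n")
        case True then show ?thesis using Utop islin_smul[OF phl x] by simp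
      next
        case nt: False
        show ?thesis
        proof (cases "\<exists>k\<in>{1..m}. \<exists>t. in_row n J k t r")
          case True
          then obtain k t where kt: "k \<in> {1..m}" "in_row n J k t r" by blast
          have "islin N 1 (Ps k (t + 1))" using Ps[OF kt(1)] in_row_t[OF kt(2)] unfolding N_def by blast
          then show ?thesis using Ublk[OF kt] islin_smul[OF _ x] by simp
        next
          case False then show ?thesis using nt Uelse by simp
        qed
      qed
    qed
  qed
  have fT: "finite (Tset m J)" by (rule Tset_finite)
  have TV: "u \<in> VJ m J" if "u \<in> Tset m J" for u using Tset_VJ that by blast
  have U2: "U (Lam u) = blockLambda n m J a e u" if u: "u \<in> VJ m J" for u
  proof
    fix r
    obtain i c where ic: "u = (i, c)" by fastforce
    have i: "i \<in> {1..m}" "1 \<le> c" "c \<le> J i" using u unfolding ic VJ_mem by auto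
    show "U (Lam u) r = blockLambda n m J a e u r"
    proof (cases "r < n")
      case True
      show ?thesis
      proof (cases "c = 1")
        case c1: True
        then show ?thesis unfolding ic using Utop[OF True] blockLambda_top[OF True, of m J a e i c] ai i by simp
      next
        case False
        then have "(i, c) \<in> Tset m J" unfolding Tset_eq using i by auto
        then have "\<phi> (Lam (i, c)) = (\<lambda>k. 0)"
          using okproj_kill[OF ph fT] Lv[OF u] ic unfolding N_def by simp
        then show ?thesis unfolding ic using Utop[OF True] blockLambda_top[OF True, of m J a e i c] False by simp
      qed
    next
      case nt: False
      show ?thesis
      proof (cases "\<exists>k\<in>{1..m}. \<exists>t. in_row n J k t r")
        case True
        then obtain k t where kt: "k \<in> {1..m}" "in_row n J k t r" by blast
        have "Ps k (t + 1) (Lam u) 0 = cval (e k (t + 1)) k (t + 1) u"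
          using Ps[OF kt(1)] in_row_t[OF kt(2)] u by blast
        then show ?thesis unfolding Ublk[OF kt] blockLambda_row[OF kt] ic cval_def
          using in_row_t[OF kt(2)] by auto
      next
        case False then show ?thesis using nt Uelse blockLambda_else by simp
      qed
    qed
  qed
  have U3: "x = (\<lambda>k. 0)" if x: "x \<in> vecs N" and Ux: "U x = (\<lambda>k. 0)" for x
  proof -
    have "\<phi> x = (\<lambda>k. 0)"
    proof
      fix r show "\<phi> x r = 0"
      proof (cases "r < n")
        case True then show ?thesis using Utop[OF True, of x] Ux by simp
      next
        case False then show ?thesis using islin_vecs[OF phl x] by (simp add: vecs_def)
      qed
    qed
    then have "x \<in> rspan Lam (Tset m J)" using okproj_ker[OF ph] x unfolding N_def by blast
    then obtain d where d: "x = lincomb Lam (Tset m J) d" by (rule rspanE)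
    have dz: "d u0 = 0" if u0: "u0 \<in> Tset m J" for u0
    proof -
      obtain k b where kb: "u0 = (k, b)" by fastforce
      have k: "k \<in> {1..m}" "2 \<le> b" "b \<le> J k" using u0 unfolding kb Tset_eq by auto
      have P: "islin N 1 (Ps k b)" "\<forall>u\<in>VJ m J. Ps k b (Lam u) 0 = cval (e k b) k b u"
        using Ps[OF k] unfolding N_def by auto
      have "U x (rowT n J k b) = Ps k b x 0"
        using Ublk[OF k(1) rowT_in_row[where n=n and J=J and k=k and b=b, OF k(2,3)]] k by simp
      also have "Ps k b x = lincomb (\<lambda>u. Ps k b (Lam u)) (Tset m J) d"
        unfolding d by (rule lincomb_lin[OF P(1) fT, symmetric]) (use Lv TV in auto)
      also have "\<dots> 0 = (\<Sum>u\<in>Tset m J. d u * cval (e k b) k b u)"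
        unfolding lincomb_def using P(2) TV by (auto intro!: sum.cong)
      also have "\<dots> = (\<Sum>u\<in>Tset m J. if u = u0 then d u else 0)"
        by (rule sum.cong) (auto simp: cval_def Tset_eq kb split: if_splits)
      also have "\<dots> = d u0" using fT u0 by simp
      finally show ?thesis using Ux by simp
    qed
    have "x = lincomb Lam (Tset m J) (\<lambda>u. 0)" unfolding d by (rule lincomb_cong) (use dz in auto)
    then show ?thesis using lincomb_zero by simp
  qed
  have U4: "\<exists>x\<in>vecs N. U x = y" if y: "y \<in> vecs N" for y
  proof -
    obtain F0 where F0: "F0 \<in> K" "card F0 = n" using ssphere_facts(6)[OF K] by blast
    have F0m: "F0 \<subseteq> {1..m}" using ssphere_facts(1)[OF K] F0 by auto
    have fF: "finite F0" using F0m by (rule finite_subset) simp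
    have aB: "is_basis n a F0" using a_basis[OF K J c ph ai F0] .
    define ytop where "ytop = (\<lambda>r. if r < n then y r else 0)"
    have "ytop \<in> vecs n" unfolding ytop_def vecs_def by simp
    then obtain dd where dd: "lincomb a F0 dd = ytop" using basis_rep[OF aB] by blast
    have L1: "Lam (i, 1) \<in> vecs N" if "i \<in> F0" for i using Lv that F0m J by (auto simp: VJ_def)
    define x0 where "x0 = (\<lambda>k. \<Sum>i\<in>F0. dd i * Lam (i, 1) k)"
    have x0v: "x0 \<in> vecs N" unfolding x0_def using L1 by (intro vecs_sum) auto
    have "\<phi> x0 = (\<lambda>k. \<Sum>i\<in>F0. dd i * \<phi> (Lam (i, 1)) k)"
      unfolding x0_def by (rule islin_sum[OF phl fF]) (use L1 in auto)
    also have "\<dots> = lincomb a F0 dd" unfolding lincomb_def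
    proof (rule ext, rule sum.cong)
      fix k i assume "i \<in> F0" then show "dd i * \<phi> (Lam (i, 1)) k = dd i * a i k" using ai F0m by auto
    qed simp
    finally have phx0: "\<phi> x0 = ytop" using dd by simp
    define zz where "zz u = y (rowT n J (fst u) (snd u)) - U x0 (rowT n J (fst u) (snd u))" for u
    define x where "x = (\<lambda>k. x0 k + (\<Sum>u\<in>Tset m J. zz u * Lam u k))"
    have sv: "(\<lambda>k. \<Sum>u\<in>Tset m J. zz u * Lam u k) \<in> vecs N" using Lv TV by (intro vecs_sum) auto
    have xv: "x \<in> vecs N" unfolding x_def using x0v sv by auto
    have "U x = (\<lambda>k. U x0 k + U (\<lambda>k. \<Sum>u\<in>Tset m J. zz u * Lam u k) k)"
      unfolding x_def by (rule islin_add[OF Ulin x0v sv])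
    also have "U (\<lambda>k. \<Sum>u\<in>Tset m J. zz u * Lam u k) = (\<lambda>k. \<Sum>u\<in>Tset m J. zz u * U (Lam u) k)"
      by (rule islin_sum[OF Ulin fT]) (use Lv TV in auto)
    finally have Ux: "U x = (\<lambda>r. U x0 r + (\<Sum>u\<in>Tset m J. zz u * blockLambda n m J a e u r))"
      using U2 TV by simp
    have bT: "blockLambda n m J a e u r = (if r = rowT n J (fst u) (snd u) then 1 else 0)"
      if "u \<in> Tset m J" for u r
      using that blockLambda_T[of "fst u" m "snd u" J n a e r] unfolding Tset_eq by auto
    have "U x r = y r" for r
    proof (cases "r < n")
      case True
      have "(\<Sum>u\<in>Tset m J. zz u * blockLambda n m J a e u r) = 0"
        using bT rowT_ge True by (auto intro!: sum.neutral) (metis leD)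
      then show ?thesis using Ux Utop[OF True] phx0 True by (simp add: ytop_def)
    next
      case nt: False
      show ?thesis
      proof (cases "\<exists>k\<in>{1..m}. \<exists>t. in_row n J k t r")
        case True
        then obtain k t where kt: "k \<in> {1..m}" "in_row n J k t r" by blast
        have u0: "(k, t + 1) \<in> Tset m J" using kt in_row_t[OF kt(2)] unfolding Tset_eq by auto
        have "(\<Sum>u\<in>Tset m J. zz u * blockLambda n m J a e u r) =
            (\<Sum>u\<in>Tset m J. if u = (k, t + 1) then zz u else 0)"
        proof (rule sum.cong)
          fix u assume u: "u \<in> Tset m J"
          then have uu: "fst u \<in> {1..m}" "2 \<le> snd u" "snd u \<le> J (fst u)" unfolding Tset_eq by auto
          show "zz u * blockLambda n m J a e u r = (if u = (k, t + 1) then zz u else 0)"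
            unfolding bT[OF u] using rowT_unique[OF uu kt] by (cases u) auto
        qed simp
        also have "\<dots> = zz (k, t + 1)" using fT u0 by simp
        also have "\<dots> = y r - U x0 r"
        proof -
          have "r = rowT n J k (t + 1)" using rowT_unique[OF kt(1) _ _ kt, of "t + 1"] in_row_t[OF kt(2)] by simp
          then show ?thesis unfolding zz_def by simp
        qed
        finally show ?thesis using Ux by simp
      next
        case False
        then have "\<not> r < N" using in_row_exists[of n r m J] nt unfolding N_def by auto
        then have "y r = 0" using y by (simp add: vecs_def)
        then show ?thesis using Uelse[OF nt False] by simp
      qed
    qed
    then show ?thesis using xv by blast
  qed
  have "okproj N N Lam {} U"
    unfolding okproj_def
  proof (intro conjI ballI)
    show "islin N N U" by (rule Ulin)
    show "rspan Lam {} \<subseteq> vecs N" by simp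
  next
    fix y :: "nat \<Rightarrow> 'r" assume "y \<in> vecs N" then show "\<exists>x\<in>vecs N. U x = y" by (rule U4)
  next
    fix x :: "nat \<Rightarrow> 'r" assume x: "x \<in> vecs N"
    show "(U x = (\<lambda>k. 0)) = (x \<in> rspan Lam {})"
      using U3[OF x] islin_zero[OF Ulin] by auto
  qed
  then show ?thesis using U2 unfolding N_def by blast
qed


lemma KJ_sub: "\<sigma> \<in> KJ m K J \<Longrightarrow> \<sigma> \<subseteq> VJ m J"
  unfolding KJ_def by auto

lemma claim2:
  fixes a :: "nat \<Rightarrow> nat \<Rightarrow> 'r::comm_ring_1"
  assumes K: "star_shaped_sphere n m K" and J: "\<forall>i\<in>{1..m}. 1 \<le> J i"
    and p: "realizable_puzzle n m K J p" and a: "a \<in> p one_idx"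
    and e: "\<forall>v\<in>{1..m}. \<forall>b\<in>{2..J v}. std_ok n m K p a v b (e v b)"
  shows "charmap (NJ n m J) (KJ m K J) (blockLambda n m J a e) \<and> realizes n m J (blockLambda n m J a e) p"
proof -
  define N where "N = NJ n m J"
  obtain Lam where c: "charmap N (KJ m K J) Lam" and re: "realizes n m J Lam p"
    using p unfolding realizable_puzzle_def N_def by blast
  have Lv: "Lam u \<in> vecs N" if "u \<in> VJ m J" for u
    using charmap_vecs[OF K J c[unfolded N_def] that] unfolding N_def .
  obtain \<phi> where ph: "okproj N n Lam (Tset m J) \<phi>" and ai: "\<forall>i\<in>{1..m}. a i = \<phi> (Lam (i, 1))"
    and a0: "\<forall>i. i \<notin> {1..m} \<longrightarrow> a i = (\<lambda>k. 0)"
    using get_phi[OF J re a] Lv unfolding N_def by blast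
  define Ps where "Ps k b = (SOME P. islin N 1 P \<and> (\<forall>u\<in>VJ m J. P (Lam u) 0 = cval (e k b) k b u))" for k b
  have Ps: "islin N 1 (Ps k b) \<and> (\<forall>u\<in>VJ m J. Ps k b (Lam u) 0 = cval (e k b) k b u)"
    if k: "k \<in> {1..m}" "2 \<le> b" "b \<le> J k" for k b
  proof -
    have "std_ok n m K p a k b (e k b)" using e k by auto
    from psi2[OF K J c[unfolded N_def] re ph[unfolded N_def] ai a0 k this]
    have "\<exists>P. islin N 1 P \<and> (\<forall>u\<in>VJ m J. P (Lam u) 0 = cval (e k b) k b u)" unfolding N_def .
    then show ?thesis unfolding Ps_def by (rule someI_ex)
  qed
  obtain U where U: "okproj N N Lam {} U" and U2: "\<forall>u\<in>VJ m J. U (Lam u) = blockLambda n m J a e u"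
    using claim2_core[OF K J c[unfolded N_def] re ph[unfolded N_def] ai a0, of Ps e] Ps
    unfolding N_def by blast
  have Ul: "islin N N U" and Us: "\<forall>y\<in>vecs N. \<exists>x\<in>vecs N. U x = y"
    and Uk: "\<forall>x\<in>vecs N. U x = (\<lambda>k. 0) \<longleftrightarrow> x \<in> rspan Lam {}"
    using U unfolding okproj_def by blast+
  have cm: "charmap N (KJ m K J) (blockLambda n m J a e)"
    unfolding charmap_def
  proof (intro conjI ballI impI)
    fix v assume "v \<in> \<Union> (KJ m K J)"
    then have v: "v \<in> VJ m J" using KJ_sub by blast
    then show "blockLambda n m J a e v \<in> vecs N" using U2 islin_vecs[OF Ul Lv[OF v]] by simp
  next
    fix \<sigma> assume s: "\<sigma> \<in> KJ m K J" and cs: "card \<sigma> = N"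
    have sv: "\<sigma> \<subseteq> VJ m J" using KJ_sub[OF s] .
    have fs: "finite \<sigma>" using finite_subset[OF sv VJ_finite] .
    have "is_basis N Lam \<sigma>" using c s cs unfolding charmap_def by blast
    then have "is_basis N Lam ({} \<union> \<sigma>)" by simp
    from basis_quot[OF this _ _ fs Ul Us Uk] have "is_basis N (\<lambda>u. U (Lam u)) \<sigma>" by simp
    then show "is_basis N (blockLambda n m J a e) \<sigma>" by (rule basis_cong) (use U2 sv in auto)
  qed
  have "p \<alpha> = projJ n m J (blockLambda n m J a e) \<alpha>" if al: "\<alpha> \<in> IJ m J" for \<alpha>
  proof -
    have sv: "sigmaJ m J \<alpha> \<subseteq> VJ m J" by (rule sigmaJ_VJ)
    have "projK n m N (blockLambda n m J a e) (sigmaJ m J \<alpha>) (\<lambda>i. (i, \<alpha> i)) =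
        projK n m N Lam ({} \<union> (\<lambda>x. x) ` sigmaJ m J \<alpha>) (\<lambda>i. (i, \<alpha> i))"
    proof (rule projK_comp[OF U])
      show "finite {}" by simp
      show "finite (sigmaJ m J \<alpha>)" by (rule sigmaJ_finite)
      show "inj_on (\<lambda>x. x) (sigmaJ m J \<alpha>)" by simp
      show "{} \<inter> (\<lambda>x. x) ` sigmaJ m J \<alpha> = {}" by simp
      show "\<forall>u\<in>{} \<union> (\<lambda>x. x) ` sigmaJ m J \<alpha>. Lam u \<in> vecs N" using Lv sv by auto
      show "\<forall>i\<in>{1..m}. Lam (i, \<alpha> i) \<in> vecs N" using Lv IJ_VJ[OF al] by auto
      show "\<forall>v\<in>sigmaJ m J \<alpha>. blockLambda n m J a e v = U (Lam v)" using U2 sv by auto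
      show "\<forall>i\<in>{1..m}. blockLambda n m J a e (i, \<alpha> i) = U (Lam (i, \<alpha> i))" using U2 IJ_VJ[OF al] by auto
    qed
    also have "\<dots> = projJ n m J Lam \<alpha>" unfolding projJ_def N_def by simp
    also have "\<dots> = p \<alpha>" using re al unfolding realizes_def by simp
    finally show ?thesis unfolding projJ_def N_def by simp
  qed
  then show ?thesis using cm unfolding realizes_def N_def by blast
qed


definition iw :: "nat \<Rightarrow> nat \<Rightarrow> nat \<times> nat \<Rightarrow> nat \<times> nat" where
  "iw k b u = (if u = (k, 2) then (k, b) else u)"

lemma KJ_wed_lift:
  assumes K: "star_shaped_sphere n m K" and J: "\<forall>i\<in>{1..m}. 1 \<le> J i"
    and k: "k \<in> {1..m}" and b: "2 \<le> b" "b \<le> J k"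
    and W: "W \<in> KJ m K (wedJ k)"
  shows "(Tset m J - {(k, b)}) \<union> iw k b ` W \<in> KJ m K J"
proof -
  have Wv: "W \<subseteq> VJ m (wedJ k)" using W unfolding KJ_def by auto
  have Wv2: "W \<subseteq> (\<lambda>i. (i, 1)) ` {1..m} \<union> {(k, 2)}" using Wv VJ_wed[OF k] by simp
  have iwW: "iw k b ` W \<subseteq> VJ m J"
  proof
    fix x assume "x \<in> iw k b ` W"
    then obtain u where u: "u \<in> W" "x = iw k b u" by blast
    then show "x \<in> VJ m J" using Wv2 k b J by (auto simp: iw_def VJ_def)
  qed
  have sub: "(Tset m J - {(k, b)}) \<union> iw k b ` W \<subseteq> VJ m J" using Tset_VJ iwW by auto
  have "\<not> (\<Union>i\<in>\<tau>. {(i, c) | c. 1 \<le> c \<and> c \<le> J i}) \<subseteq> (Tset m J - {(k, b)}) \<union> iw k b ` W"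
    if t: "minimal_nonface m K \<tau>" for \<tau>
  proof
    assume S: "(\<Union>i\<in>\<tau>. {(i, c) | c. 1 \<le> c \<and> c \<le> J i}) \<subseteq> (Tset m J - {(k, b)}) \<union> iw k b ` W"
    have tm: "\<tau> \<subseteq> {1..m}" using minimal_nonface_card(2)[OF K t] .
    have "(\<Union>i\<in>\<tau>. {(i, c) | c. 1 \<le> c \<and> c \<le> wedJ k i}) \<subseteq> W"
    proof
      fix x assume "x \<in> (\<Union>i\<in>\<tau>. {(i, c) | c. 1 \<le> c \<and> c \<le> wedJ k i})"
      then obtain i c where x: "x = (i, c)" "i \<in> \<tau>" "1 \<le> c" "c \<le> wedJ k i" by blast
      have i: "i \<in> {1..m}" using tm x(2) by auto
      show "x \<in> W"
      proof (cases "c = 1")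
        case True
        have "(i, 1) \<in> (\<Union>i\<in>\<tau>. {(i, c) | c. 1 \<le> c \<and> c \<le> J i})" using x(2) J i by auto
        then have "(i, 1) \<in> (Tset m J - {(k, b)}) \<union> iw k b ` W" using S by blast
        moreover have "(i, 1) \<notin> Tset m J" unfolding Tset_eq by simp
        ultimately have "(i, 1) \<in> iw k b ` W" by blast
        then obtain u where u: "u \<in> W" "(i, 1) = iw k b u" by blast
        then have "u = (i, 1)" using b by (auto simp: iw_def split: if_splits)
        then show ?thesis using u x True by simp
      next
        case False
        then have ck: "i = k" "c = 2" using x by (auto simp: wedJ_def split: if_splits)
        have "(k, b) \<in> (\<Union>i\<in>\<tau>. {(i, c) | c. 1 \<le> c \<and> c \<le> J i})" using x(2) ck b by auto
        then have "(k, b) \<in> (Tset m J - {(k, b)}) \<union> iw k b ` W" using S by blast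
        then have "(k, b) \<in> iw k b ` W" by blast
        then obtain u where u: "u \<in> W" "(k, b) = iw k b u" by blast
        have "u = (k, 2)"
        proof (cases "u = (k, 2)")
          case False
          then have "u = (k, b)" using u by (simp add: iw_def)
          then have "b \<le> wedJ k k" using u Wv VJ_mem[of k b m "wedJ k"] by auto
          then show ?thesis using b \<open>u = (k, b)\<close> by (simp add: wedJ_def)
        qed simp
        then show ?thesis using u x ck by simp
      qed
    qed
    then show False using W t unfolding KJ_def by blast
  qed
  then show ?thesis unfolding KJ_def using sub by blast
qed


lemma card_Tset_pos: "k \<in> {1..m} \<Longrightarrow> 2 \<le> b \<Longrightarrow> b \<le> J k \<Longrightarrow> (k, b) \<in> Tset m J"
  unfolding Tset_eq by auto

lemma claim1:
  fixes a :: "nat \<Rightarrow> nat \<Rightarrow> 'r::comm_ring_1"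
  assumes K: "star_shaped_sphere n m K" and J: "\<forall>i\<in>{1..m}. 1 \<le> J i"
    and p: "realizable_puzzle n m K J p" and a: "a \<in> p one_idx"
    and k: "k \<in> {1..m}" and b: "2 \<le> b" "b \<le> J k"
  shows "\<exists>ev. std_ok n m K p a k b ev"
proof -
  define N where "N = NJ n m J"
  obtain Lam where c: "charmap N (KJ m K J) Lam" and re: "realizes n m J Lam p"
    using p unfolding realizable_puzzle_def N_def by blast
  have Lv: "Lam u \<in> vecs N" if "u \<in> VJ m J" for u
    using charmap_vecs[OF K J c[unfolded N_def] that] unfolding N_def .
  obtain \<phi> where ph: "okproj N n Lam (Tset m J) \<phi>" and ai: "\<forall>i\<in>{1..m}. a i = \<phi> (Lam (i, 1))"
    and a0: "\<forall>i. i \<notin> {1..m} \<longrightarrow> a i = (\<lambda>k. 0)"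
    using get_phi[OF J re a] Lv unfolding N_def by blast
  have phl: "islin N n \<phi>" using ph unfolding okproj_def by blast
  have fT: "finite (Tset m J)" by (rule Tset_finite)
  have TV: "u \<in> VJ m J" if "u \<in> Tset m J" for u using Tset_VJ that by blast
  have kbT: "(k, b) \<in> Tset m J" using k b by (rule card_Tset_pos)
  have k1V: "(k, 1) \<in> VJ m J" using k J by (auto simp: VJ_def)
  obtain F where F: "F \<in> K" "card F = n" "k \<in> F" using purity[OF K k] by blast
  have Fm: "F \<subseteq> {1..m}" using ssphere_facts(1)[OF K] F by auto
  have fF: "finite F" using Fm by (rule finite_subset) simp
  have BFb: "is_basis N Lam (BF m J F)"
    using c BF_KJ[OF K J F(1)] card_BF[OF K F(1,2)] unfolding charmap_def N_def by auto
  have fBF: "finite (BF m J F)" unfolding BF_def using fT fF by simp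
  define gv :: "nat \<times> nat \<Rightarrow> nat \<Rightarrow> 'r" where "gv u = (if u = (k, b) then unitv 0 else if u = (k, 1) then (\<lambda>r. - unitv 0 r) else (\<lambda>r. 0))"
    for u :: "nat \<times> nat"
  have gvt: "gv u \<in> vecs 1" for u unfolding gv_def unitv_def vecs_def by auto
  have "\<exists>f. islin N 1 f \<and> (\<forall>u\<in>BF m J F. f (Lam u) = gv u)"
    by (rule basis_extend[OF BFb fBF]) (rule gvt)
  then obtain f where f: "islin N 1 f" "\<forall>u\<in>BF m J F. f (Lam u) = gv u" by blast
  define \<psi> where "\<psi> x = f x 0" for x
  have \<psi>kb: "\<psi> (Lam (k, b)) = 1" using f(2) kbT unfolding \<psi>_def gv_def BF_def by (simp add: unitv_def)
  have \<psi>k1: "\<psi> (Lam (k, 1)) = - 1" using f(2) F(3) b unfolding \<psi>_def gv_def BF_def by (simp add: unitv_def)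
  have \<psi>T: "\<psi> (Lam u) = (if u = (k, b) then 1 else 0)" if u: "u \<in> Tset m J" for u
    using f(2) u b unfolding \<psi>_def gv_def BF_def by (auto simp: unitv_def Tset_eq)
  have \<psi>lc: "\<psi> (lincomb Lam S d) = (\<Sum>u\<in>S. d u * \<psi> (Lam u))" if "S \<subseteq> VJ m J" for S d
  proof -
    have fS: "finite S" using finite_subset[OF that VJ_finite] .
    have "f (lincomb Lam S d) = lincomb (\<lambda>u. f (Lam u)) S d"
      by (rule lincomb_lin[OF f(1) fS, symmetric]) (use Lv that in auto)
    then show ?thesis unfolding \<psi>_def lincomb_def by simp
  qed
  define ev where "ev i = \<psi> (Lam (i, 1))" for i
  define \<tau> where "\<tau> = Tset m J - {(k, b)}"
  have T\<tau>: "Tset m J = \<tau> \<union> {(k, b)}" "\<tau> \<inter> {(k, b)} = {}" using kbT unfolding \<tau>_def by auto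
  have f\<tau>: "finite \<tau>" using fT unfolding \<tau>_def by simp
  define M where "M x = (\<lambda>r. if r < n then \<phi> x r else if r = n then \<psi> x else 0)" for x
  have Ml: "islin N (n + 1) M"
    unfolding islin_def
  proof (intro conjI ballI allI)
    fix x :: "nat \<Rightarrow> 'r" assume "x \<in> vecs N" show "M x \<in> vecs (n + 1)" unfolding M_def vecs_def by auto
  next
    fix x y :: "nat \<Rightarrow> 'r" assume x: "x \<in> vecs N" and y: "y \<in> vecs N"
    show "M (\<lambda>k. x k + y k) = (\<lambda>k. M x k + M y k)"
      unfolding M_def \<psi>_def using islin_add[OF phl x y] islin_add[OF f(1) x y] by (auto simp: fun_eq_iff)
  next
    fix d :: 'r and x :: "nat \<Rightarrow> 'r" assume x: "x \<in> vecs N"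
    show "M (\<lambda>k. d * x k) = (\<lambda>k. d * M x k)"
      unfolding M_def \<psi>_def using islin_smul[OF phl x] islin_smul[OF f(1) x] by (auto simp: fun_eq_iff)
  qed
  have MT: "okproj N (n + 1) Lam \<tau> M"
    unfolding okproj_def
  proof (intro conjI ballI)
    show "islin N (n + 1) M" by (rule Ml)
    show "rspan Lam \<tau> \<subseteq> vecs N" by (rule rspan_vecs) (use Lv TV in \<open>auto simp: \<tau>_def\<close>)
  next
    fix y :: "nat \<Rightarrow> 'r" assume y: "y \<in> vecs (n + 1)"
    have aB: "is_basis n a F" using a_basis[OF K J c[unfolded N_def] ph[unfolded N_def] ai F(1,2)] .
    define ytop where "ytop = (\<lambda>r. if r < n then y r else 0)"
    have "ytop \<in> vecs n" unfolding ytop_def vecs_def by simp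
    then obtain dd where dd: "lincomb a F dd = ytop" using basis_rep[OF aB] by blast
    have L1: "Lam (i, 1) \<in> vecs N" if "i \<in> F" for i using Lv that Fm J by (auto simp: VJ_def)
    define x0 where "x0 = (\<lambda>k. \<Sum>i\<in>F. dd i * Lam (i, 1) k)"
    have x0v: "x0 \<in> vecs N" unfolding x0_def using L1 by (intro vecs_sum) auto
    have "\<phi> x0 = (\<lambda>k. \<Sum>i\<in>F. dd i * \<phi> (Lam (i, 1)) k)"
      unfolding x0_def by (rule islin_sum[OF phl fF]) (use L1 in auto)
    also have "\<dots> = lincomb a F dd" unfolding lincomb_def
    proof (rule ext, rule sum.cong)
      fix k i assume "i \<in> F" then show "dd i * \<phi> (Lam (i, 1)) k = dd i * a i k" using ai Fm by auto
    qed simp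
    finally have phx0: "\<phi> x0 = ytop" using dd by simp
    have kbv: "Lam (k, b) \<in> vecs N" using Lv TV kbT by blast
    define x where "x = (\<lambda>r. x0 r + (y n - \<psi> x0) * Lam (k, b) r)"
    have xv: "x \<in> vecs N" unfolding x_def using x0v kbv by auto
    have pkb: "\<phi> (Lam (k, b)) = (\<lambda>k. 0)" using okproj_kill[OF ph fT kbT kbv] .
    have "\<phi> x = (\<lambda>r. \<phi> x0 r + \<phi> (\<lambda>r. (y n - \<psi> x0) * Lam (k, b) r) r)"
      unfolding x_def by (rule islin_add[OF phl x0v]) (use kbv in auto)
    also have "\<phi> (\<lambda>r. (y n - \<psi> x0) * Lam (k, b) r) = (\<lambda>r. 0)"
      using islin_smul[OF phl kbv, of "y n - \<psi> x0"] pkb by simp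
    finally have phx: "\<phi> x = ytop" using phx0 by simp
    have "f x = (\<lambda>r. f x0 r + f (\<lambda>r. (y n - \<psi> x0) * Lam (k, b) r) r)"
      unfolding x_def by (rule islin_add[OF f(1) x0v]) (use kbv in auto)
    then have "\<psi> x = \<psi> x0 + (y n - \<psi> x0) * \<psi> (Lam (k, b))"
      unfolding \<psi>_def using islin_smul[OF f(1) kbv, of "y n - f x0 0"] by simp
    then have psx: "\<psi> x = y n" using \<psi>kb by simp
    have "M x = y"
    proof
      fix r show "M x r = y r"
        using phx psx y unfolding M_def ytop_def vecs_def by auto
    qed
    then show "\<exists>x\<in>vecs N. M x = y" using xv by blast
  next
    fix x :: "nat \<Rightarrow> 'r" assume x: "x \<in> vecs N"
    show "(M x = (\<lambda>k. 0)) = (x \<in> rspan Lam \<tau>)"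
    proof
      assume Mx: "M x = (\<lambda>k. 0)"
      have "\<phi> x = (\<lambda>k. 0)"
      proof
        fix r show "\<phi> x r = 0"
        proof (cases "r < n")
          case True then show ?thesis using fun_cong[OF Mx, of r] unfolding M_def by simp
        next
          case False then show ?thesis using islin_vecs[OF phl x] by (simp add: vecs_def)
        qed
      qed
      then have "x \<in> rspan Lam (Tset m J)" using okproj_ker[OF ph x] by simp
      then obtain d where d: "x = lincomb Lam (Tset m J) d" by (rule rspanE)
      have "\<psi> x = (\<Sum>u\<in>Tset m J. d u * \<psi> (Lam u))" unfolding d by (rule \<psi>lc) (use TV in auto)
      also have "\<dots> = (\<Sum>u\<in>Tset m J. if u = (k, b) then d u else 0)"
        by (rule sum.cong) (auto simp: \<psi>T)
      also have "\<dots> = d (k, b)" using fT kbT by simp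
      finally have "d (k, b) = 0" using fun_cong[OF Mx, of n] unfolding M_def by simp
      have "x = (\<lambda>r. lincomb Lam \<tau> d r + lincomb Lam {(k, b)} d r)"
        unfolding d T\<tau>(1) by (rule lincomb_union[OF f\<tau> _ T\<tau>(2)]) simp
      also have "lincomb Lam {(k, b)} d = (\<lambda>r. 0)" unfolding lincomb_def using \<open>d (k, b) = 0\<close> by simp
      finally have "x = lincomb Lam \<tau> d" by simp
      then show "x \<in> rspan Lam \<tau>" by (intro rspanI) simp
    next
      assume "x \<in> rspan Lam \<tau>"
      then obtain d where d: "x = lincomb Lam \<tau> d" by (rule rspanE)
      have "rspan Lam \<tau> \<subseteq> rspan Lam (Tset m J)" by (rule rspan_mono) (use fT in \<open>auto simp: \<tau>_def\<close>)
      then have "x \<in> rspan Lam (Tset m J)" using \<open>x \<in> rspan Lam \<tau>\<close> by blast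
      then have p0: "\<phi> x = (\<lambda>k. 0)" using okproj_ker[OF ph x] by simp
      have "\<psi> x = (\<Sum>u\<in>\<tau>. d u * \<psi> (Lam u))" unfolding d by (rule \<psi>lc) (use TV in \<open>auto simp: \<tau>_def\<close>)
      also have "\<dots> = 0" by (rule sum.neutral) (auto simp: \<tau>_def \<psi>T)
      finally show "M x = (\<lambda>k. 0)" using p0 unfolding M_def by (auto simp: fun_eq_iff)
    qed
  qed
  have Vw: "VJ m (wedJ k) = (\<lambda>i. (i, 1)) ` {1..m} \<union> {(k, 2)}" using VJ_wed[OF k] .
  have iw1: "iw k b (i, 1) = (i, 1)" for i by (simp add: iw_def)
  have iw2: "iw k b (k, 2) = (k, b)" by (simp add: iw_def)
  have SE: "stdform n a k ev u = M (Lam (iw k b u))" if u: "u \<in> VJ m (wedJ k)" for u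
  proof -
    consider (a) i where "u = (i, 1)" "i \<in> {1..m}" | (b) "u = (k, 2)" using u Vw by auto
    then show ?thesis
    proof cases
      case (a i)
      have L1: "Lam (i, 1) \<in> vecs N" using Lv a(2) J by (auto simp: VJ_def)
      show ?thesis unfolding a iw1 M_def stdform_def ev_def
        using ai a(2) \<psi>k1 by (auto simp: fun_eq_iff)
    next
      case b
      have kbv: "Lam (k, b) \<in> vecs N" using Lv TV kbT by blast
      have pkb: "\<phi> (Lam (k, b)) = (\<lambda>k. 0)" using okproj_kill[OF ph fT kbT kbv] .
      show ?thesis unfolding b iw2 M_def stdform_def using pkb \<psi>kb by (auto simp: fun_eq_iff)
    qed
  qed
  have iw_inj: "inj_on (iw k b) (VJ m (wedJ k))"
  proof (rule inj_onI)
    fix u v assume u: "u \<in> VJ m (wedJ k)" and v: "v \<in> VJ m (wedJ k)" and e: "iw k b u = iw k b v"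
    have ne: "(k, b) \<notin> VJ m (wedJ k) \<or> b = 2" unfolding VJ_mem wedJ_def using b by auto
    show "u = v" using e u v ne unfolding iw_def by (auto split: if_splits)
  qed
  have NT: "N = n + card (Tset m J)" unfolding N_def NJ_def card_Tset ..
  have cT: "card \<tau> = card (Tset m J) - 1" unfolding \<tau>_def using kbT fT by simp
  have cT1: "1 \<le> card (Tset m J)" using kbT fT by (metis card_0_eq empty_iff not_less_eq_eq One_nat_def le_0_eq)
  have cm: "charmap (n + 1) (KJ m K (wedJ k)) (stdform n a k ev)"
    unfolding charmap_def
  proof (intro conjI ballI impI)
    fix v show "stdform n a k ev v \<in> vecs (n + 1)" by (rule stdform_vecs)
  next
    fix W assume W: "W \<in> KJ m K (wedJ k)" and cW: "card W = n + 1"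
    have Wv: "W \<subseteq> VJ m (wedJ k)" using KJ_sub[OF W] .
    have fW: "finite W" using finite_subset[OF Wv VJ_finite] .
    have injW: "inj_on (iw k b) W" using inj_on_subset[OF iw_inj Wv] .
    have W'K: "\<tau> \<union> iw k b ` W \<in> KJ m K J" unfolding \<tau>_def by (rule KJ_wed_lift[OF K J k b W])
    have disj: "\<tau> \<inter> iw k b ` W = {}"
    proof -
      have "iw k b ` W \<subseteq> (\<lambda>i. (i, 1)) ` {1..m} \<union> {(k, b)}" using Wv Vw by (auto simp: iw_def)
      then show ?thesis unfolding \<tau>_def Tset_eq by auto
    qed
    have "card (\<tau> \<union> iw k b ` W) = card \<tau> + card (iw k b ` W)"
      by (rule card_Un_disjoint) (use f\<tau> fW disj in auto)
    also have "card (iw k b ` W) = n + 1" using card_image[OF injW] cW by simp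
    finally have "card (\<tau> \<union> iw k b ` W) = N" using cT cT1 NT by simp
    then have "is_basis N Lam (\<tau> \<union> iw k b ` W)" using c W'K unfolding charmap_def by blast
    from basis_quot[OF this disj f\<tau> _ Ml] MT fW
    have "is_basis (n + 1) (\<lambda>u. M (Lam u)) (iw k b ` W)" unfolding okproj_def by blast
    from basis_reindex[OF injW this] have "is_basis (n + 1) (\<lambda>u. M (Lam (iw k b u))) W" .
    then show "is_basis (n + 1) (stdform n a k ev) W" by (rule basis_cong) (use SE Wv in auto)
  qed
  have pr1: "projJ n m (wedJ k) (stdform n a k ev) one_idx = p one_idx"
  proof -
    have "projJ n m (wedJ k) (stdform n a k ev) one_idx =
        projK n m (n + 1) (stdform n a k ev) {(k, 2)} (\<lambda>i. (i, one_idx i))"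
      unfolding projJ_def NJ_wed[OF k] sigma_wed1[OF k] ..
    also have "\<dots> = projK n m N Lam (\<tau> \<union> iw k b ` {(k, 2)}) (\<lambda>i. iw k b (i, one_idx i))"
    proof (rule projK_comp[OF MT f\<tau>])
      show "\<tau> \<inter> iw k b ` {(k, 2)} = {}" using iw2 unfolding \<tau>_def by simp
      show "\<forall>u\<in>\<tau> \<union> iw k b ` {(k, 2)}. Lam u \<in> vecs N" using iw2 Lv TV kbT unfolding \<tau>_def by auto
      show "\<forall>i\<in>{1..m}. Lam (iw k b (i, one_idx i)) \<in> vecs N"
        using Lv J by (auto simp: iw_def one_idx_def VJ_def)
      show "\<forall>v\<in>{(k, 2)}. stdform n a k ev v = M (Lam (iw k b v))" using SE Vw by auto
      show "\<forall>i\<in>{1..m}. stdform n a k ev (i, one_idx i) = M (Lam (iw k b (i, one_idx i)))"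
        using SE Vw by (auto simp: one_idx_def)
    qed auto
    also have "\<tau> \<union> iw k b ` {(k, 2)} = sigmaJ m J one_idx"
      using iw2 T\<tau>(1) unfolding Tset_def by auto
    also have "(\<lambda>i. iw k b (i, one_idx i)) = (\<lambda>i. (i, one_idx i))" by (auto simp: iw_def one_idx_def)
    also have "projK n m N Lam (sigmaJ m J one_idx) (\<lambda>i. (i, one_idx i)) = projJ n m J Lam one_idx"
      unfolding projJ_def N_def ..
    also have "\<dots> = p one_idx" using re one_IJ[OF J] unfolding realizes_def by simp
    finally show ?thesis .
  qed
  have pr2: "projJ n m (wedJ k) (stdform n a k ev) (one_idx(k := 2)) = p (one_idx(k := b))"
  proof -
    have "projJ n m (wedJ k) (stdform n a k ev) (one_idx(k := 2)) =
        projK n m (n + 1) (stdform n a k ev) {(k, 1)} (\<lambda>i. (i, (one_idx(k := 2)) i))"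
      unfolding projJ_def NJ_wed[OF k] sigma_wed2[OF k] ..
    also have "\<dots> = projK n m N Lam (\<tau> \<union> iw k b ` {(k, 1)}) (\<lambda>i. iw k b (i, (one_idx(k := 2)) i))"
    proof (rule projK_comp[OF MT f\<tau>])
      show "\<tau> \<inter> iw k b ` {(k, 1)} = {}" using iw1 unfolding \<tau>_def Tset_eq by simp
      show "\<forall>u\<in>\<tau> \<union> iw k b ` {(k, 1)}. Lam u \<in> vecs N" using iw1 Lv TV k1V unfolding \<tau>_def by auto
      show "\<forall>i\<in>{1..m}. Lam (iw k b (i, (one_idx(k := 2)) i)) \<in> vecs N"
        using Lv J k b by (auto simp: iw_def one_idx_def VJ_def)
      show "\<forall>v\<in>{(k, 1)}. stdform n a k ev v = M (Lam (iw k b v))" using SE Vw k by auto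
      show "\<forall>i\<in>{1..m}. stdform n a k ev (i, (one_idx(k := 2)) i) = M (Lam (iw k b (i, (one_idx(k := 2)) i)))"
        using SE Vw by (auto simp: one_idx_def)
    qed auto
    also have "\<tau> \<union> iw k b ` {(k, 1)} = sigmaJ m J (one_idx(k := b))"
      unfolding sigma_h[where m=m and J=J and k=k and b=b, OF k b] \<tau>_def by (simp add: iw_def)
    also have "(\<lambda>i. iw k b (i, (one_idx(k := 2)) i)) = (\<lambda>i. (i, (one_idx(k := b)) i))"
      by (auto simp: iw_def one_idx_def)
    also have "projK n m N Lam (sigmaJ m J (one_idx(k := b))) (\<lambda>i. (i, (one_idx(k := b)) i)) =
        projJ n m J Lam (one_idx(k := b))"
      unfolding projJ_def N_def ..
    also have "\<dots> = p (one_idx(k := b))" using re h_IJ[OF J k, of b] b unfolding realizes_def by simp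
    finally show ?thesis .
  qed
  have "std_ok n m K p a k b ev" unfolding std_ok_def using cm pr1 pr2 by blast
  then show ?thesis by blast
qed


theorem mainTheorem6:
  fixes n m :: nat and K :: "nat set set" and J :: "nat \<Rightarrow> nat"
    and p :: "(nat \<Rightarrow> nat) \<Rightarrow> (nat \<Rightarrow> nat \<Rightarrow> 'r::comm_ring_1) set"
    and a :: "nat \<Rightarrow> nat \<Rightarrow> 'r"
  assumes R: "R_ring TYPE('r)"
    and K: "star_shaped_sphere n m K"
    and J: "\<forall>i\<in>{1..m}. 1 \<le> J i"
    and p: "realizable_puzzle n m K J p"
    and a: "a \<in> p one_idx"
  shows
    "(\<forall>v\<in>{1..m}. \<forall>b\<in>{2..J v}. \<exists>ev. std_ok n m K p a v b ev)
   \<and> (\<forall>e. (\<forall>v\<in>{1..m}. \<forall>b\<in>{2..J v}. std_ok n m K p a v b (e v b)) \<longrightarrow>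
        charmap (NJ n m J) (KJ m K J) (blockLambda n m J a e) \<and>
        realizes n m J (blockLambda n m J a e) p)
   \<and> (\<forall>q. realizable_puzzle n m K J q \<and> q one_idx = p one_idx \<and>
        (\<forall>\<alpha>\<in>IJ m J. (\<exists>v\<in>{1..m}. \<alpha> v \<noteq> 1 \<and> (\<forall>i. i \<noteq> v \<longrightarrow> \<alpha> i = 1)) \<longrightarrow> q \<alpha> = p \<alpha>)
        \<longrightarrow> (\<forall>\<alpha>\<in>IJ m J. q \<alpha> = p \<alpha>))"
proof (intro conjI allI impI)
  show c1: "\<forall>v\<in>{1..m}. \<forall>b\<in>{2..J v}. \<exists>ev. std_ok n m K p a v b ev"
    using claim1[OF K J p a] by auto
next
  fix e assume "\<forall>v\<in>{1..m}. \<forall>b\<in>{2..J v}. std_ok n m K p a v b (e v b)"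
  from claim2[OF K J p a this]
  show "charmap (NJ n m J) (KJ m K J) (blockLambda n m J a e)" "realizes n m J (blockLambda n m J a e) p"
    by auto
next
  fix q assume q: "realizable_puzzle n m K J q \<and> q one_idx = p one_idx \<and>
        (\<forall>\<alpha>\<in>IJ m J. (\<exists>v\<in>{1..m}. \<alpha> v \<noteq> 1 \<and> (\<forall>i. i \<noteq> v \<longrightarrow> \<alpha> i = 1)) \<longrightarrow> q \<alpha> = p \<alpha>)"
  define e where "e v b = (SOME ev. std_ok n m K p a v b ev)" for v b
  have ep: "\<forall>v\<in>{1..m}. \<forall>b\<in>{2..J v}. std_ok n m K p a v b (e v b)"
  proof (intro ballI)
    fix v b assume v: "v \<in> {1..m}" and b: "b \<in> {2..J v}"
    have "\<exists>ev. std_ok n m K p a v b ev" using claim1[OF K J p a v] b by auto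
    then show "std_ok n m K p a v b (e v b)" unfolding e_def by (rule someI_ex)
  qed
  have eq: "\<forall>v\<in>{1..m}. \<forall>b\<in>{2..J v}. std_ok n m K q a v b (e v b)"
  proof (intro ballI)
    fix v b assume v: "v \<in> {1..m}" and b: "b \<in> {2..J v}"
    have "one_idx(v := b) \<in> IJ m J" using h_IJ[OF J v, of b] b by auto
    moreover have "(one_idx(v := b)) v \<noteq> 1 \<and> (\<forall>i. i \<noteq> v \<longrightarrow> (one_idx(v := b)) i = 1)"
      using b by (auto simp: one_idx_def)
    ultimately have "q (one_idx(v := b)) = p (one_idx(v := b))" using q v by blast
    then show "std_ok n m K q a v b (e v b)" using ep v b q unfolding std_ok_def by auto
  qed
  have aq: "a \<in> q one_idx" using a q by simp
  have rq: "realizes n m J (blockLambda n m J a e) q" using claim2[OF K J _ aq eq] q by blast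
  have rp: "realizes n m J (blockLambda n m J a e) p" using claim2[OF K J p a ep] by blast
  show "\<forall>\<alpha>\<in>IJ m J. q \<alpha> = p \<alpha>" using rq rp unfolding realizes_def by auto
qed

end
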